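(* Let $A\in\mathcal E_n$ with $\operatorname{rk}(A)=r$, and let $A=BCB^T$ with $B\in\mathbb R_+^{n\times r}$ and $C\in\mathbb R_+^{r\times r}$ symmetric. Suppose that the only pair $(X,W)$ satisfying $$X\in\mathbb R_+^{n\times r},\quad W\in\mathbb R_+^{r\times r},\quad W=W^T,\quad X\circ B=0,\quad W\circ C=0,\quad WC=B^TX$$ is $X=0$, $W=0$. Then $A\notin\partial\mathcal E_n$.
   Context: $\mathcal S_n^+$ is the set of $n\times n$ symmetric entrywise nonnegative real matrices; $\mathbb R_+^{p\times q}$ the entrywise nonnegative $p\times q$ real matrices. The SNT-rank $\operatorname{st}_+(A)$ of $A\in\mathcal S_n^+$ is the minimal $k$ such that $A=BCB^T$ with $B\in\mathbb R_+^{n\times k}$ and $C\in\mathcal S_k^+$. $\mathcal E_n=\{A\in\mathcal S_n^+:\operatorname{rk}(A)=\operatorname{st}_+(A)\}$. $\partial\mathcal E_n$ is the set of $A\in\mathcal E_n$ such that $A-\alpha uu^T\notin\mathcal E_n$ for every $\alpha>0$, where $u$ is the Perron eigenvector of $A$ (an entrywise nonnegative unit eigenvector for the spectral radius of $A$). $X\circ B$ denotes the entrywise (Hadamard) product. *)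

theory Defs
  imports "Jordan_Normal_Form.Spectral_Radius" "Jordan_Normal_Form.DL_Rank"
begin

definition nonneg_mat :: "real mat \<Rightarrow> bool" where
  "nonneg_mat M \<longleftrightarrow> (\<forall>i<dim_row M. \<forall>j<dim_col M. M $$ (i, j) \<ge> 0)"

definition symnn :: "nat \<Rightarrow> real mat set" where
  "symnn n = {A. A \<in> carrier_mat n n \<and> transpose_mat A = A \<and> nonneg_mat A}"

definition hadamard :: "real mat \<Rightarrow> real mat \<Rightarrow> real mat" where
  "hadamard X Y = mat (dim_row X) (dim_col X) (\<lambda>(i, j). X $$ (i, j) * Y $$ (i, j))"

definition mrank :: "real mat \<Rightarrow> nat" where
  "mrank A = vec_space.rank (dim_row A) A"

definition snt_rank :: "real mat \<Rightarrow> nat" where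
  "snt_rank A = (LEAST k. \<exists>B C. B \<in> carrier_mat (dim_row A) k \<and> nonneg_mat B \<and>
        C \<in> symnn k \<and> A = B * C * transpose_mat B)"

definition E_set :: "nat \<Rightarrow> real mat set" where
  "E_set n = {A \<in> symnn n. mrank A = snt_rank A}"

definition perron_vec :: "real mat \<Rightarrow> real vec \<Rightarrow> bool" where
  "perron_vec A u \<longleftrightarrow> u \<in> carrier_vec (dim_row A) \<and> (\<forall>i<dim_vec u. u $ i \<ge> 0) \<and>
     u \<bullet> u = 1 \<and> A *\<^sub>v u = spectral_radius (map_mat complex_of_real A) \<cdot>\<^sub>v u"

definition outer :: "real vec \<Rightarrow> real mat" where
  "outer u = mat (dim_vec u) (dim_vec u) (\<lambda>(i, j). u $ i * u $ j)"

definition bd_E :: "nat \<Rightarrow> real mat set" where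
  "bd_E n = {A \<in> E_set n. \<exists>u. perron_vec A u \<and>
      (\<forall>\<alpha>::real. \<alpha> > 0 \<longrightarrow> A - \<alpha> \<cdot>\<^sub>m outer u \<notin> E_set n)}"

end

theory Submission
  imports Defs
begin


inductive incone :: "('t \<times> ('v \<Rightarrow> real) \<times> real) set \<Rightarrow> ('v \<Rightarrow> real) \<Rightarrow> real \<Rightarrow> bool" for S where
  z: "incone S (\<lambda>_. 0) 0"
| s: "(t,a,b) \<in> S \<Longrightarrow> c \<ge> 0 \<Longrightarrow> incone S a' b' \<Longrightarrow> incone S (\<lambda>v. c * a v + a' v) (c*b + b')"

lemma incone_cong: "incone S a b \<Longrightarrow> a = a2 \<Longrightarrow> b = b2 \<Longrightarrow> incone S a2 b2" by simp

lemma incone_mem: "(t,a,b) \<in> S \<Longrightarrow> incone S a b"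
  using incone.s[OF _ _ incone.z, of t a b S 1] by simp

lemma incone_add: "incone S a b \<Longrightarrow> incone S a' b' \<Longrightarrow> incone S (\<lambda>v. a v + a' v) (b + b')"
proof (induction rule: incone.induct)
  case z
  then show ?case by simp
next
  case (s t a b c a0 b0)
  have "incone S (\<lambda>v. c * a v + (a0 v + a' v)) (c*b + (b0 + b'))"
    by (rule incone.s[OF s(1,2) s(4)[OF s(5)]])
  then show ?case by (rule incone_cong) (auto simp: algebra_simps)
qed

lemma incone_scale: "incone S a b \<Longrightarrow> (c::real) \<ge> 0 \<Longrightarrow> incone S (\<lambda>v. c * a v) (c*b)"
proof (induction rule: incone.induct)
  case z
  then show ?case using incone.z by simp
next
  case (s t a b c' a0 b0)
  have "incone S (\<lambda>v. (c*c') * a v + (c * a0 v)) ((c*c')*b + (c*b0))"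
    by (rule incone.s[OF s(1) _ s(4)[OF s(5)]]) (use s in auto)
  then show ?case by (rule incone_cong) (auto simp: algebra_simps)
qed

lemma incone_trans0: "incone S' a b \<Longrightarrow> (\<And>t a b. (t,a,b)\<in>S' \<Longrightarrow> incone S a b) \<Longrightarrow> incone S a b"
proof (induction rule: incone.induct)
  case z
  show ?case by (rule incone.z)
next
  case (s t a b c a' b')
  show ?case by (rule incone_add[OF incone_scale[OF s(5)[OF s(1)] s(2)] s(4)[OF s(5)]])
qed
lemma incone_trans: assumes "\<And>t a b. (t,a,b)\<in>S' \<Longrightarrow> incone S a b" "incone S' a b" shows "incone S a b"
  by (rule incone_trans0[OF assms(2) assms(1)])

lemma incone_zero_at0: "incone S a b \<Longrightarrow> (\<And>t a b. (t,a,b)\<in>S \<Longrightarrow> a w = 0) \<Longrightarrow> a w = 0"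
proof (induction rule: incone.induct)
  case z show ?case by simp
next
  case (s t a b c a' b')
  have 1: "a w = 0" by (rule s.prems[OF s(1)])
  have 2: "a' w = 0" using s.IH s.prems by blast
  show ?case using 1 2 by simp
qed
lemma incone_zero_at: assumes "\<And>t a b. (t,a,b)\<in>S \<Longrightarrow> a w = 0" "incone S a b" shows "a w = 0"
  by (rule incone_zero_at0[OF assms(2) assms(1)])

lemma incone_lambda:
  assumes "finite S" "incone S a \<beta>"
  shows "\<exists>l. (\<forall>s\<in>S. l s \<ge> 0) \<and> (\<forall>v. a v = (\<Sum>s\<in>S. l s * fst (snd s) v)) \<and>
     \<beta> = (\<Sum>s\<in>S. l s * snd (snd s))"
  using assms(2)
proof (induction rule: incone.induct)
  case z
  show ?case by (rule exI[of _ "\<lambda>_. 0"]) simp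
next
  case (s t a b c a' b')
  then obtain l where l: "\<forall>s\<in>S. l s \<ge> 0" "\<forall>v. a' v = (\<Sum>s\<in>S. l s * fst (snd s) v)"
     "b' = (\<Sum>s\<in>S. l s * snd (snd s))" by blast
  define \<mu> where "\<mu> = (\<lambda>s. l s + (if s = (t,a,b) then c else 0))"
  have 1: "(\<Sum>s\<in>S. \<mu> s * g s) = c * g (t,a,b) + (\<Sum>s\<in>S. l s * g s)" for g :: "_ \<Rightarrow> real"
  proof -
    have "(\<Sum>s\<in>S. \<mu> s * g s) = (\<Sum>s\<in>S. l s * g s + (if s = (t,a,b) then c * g s else 0))"
      by (rule sum.cong) (auto simp: \<mu>_def algebra_simps)
    also have "\<dots> = (\<Sum>s\<in>S. l s * g s) + (\<Sum>s\<in>S. (if s = (t,a,b) then c * g s else 0))"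
      by (rule sum.distrib)
    also have "(\<Sum>s\<in>S. (if s = (t,a,b) then c * g s else 0)) = c * g (t,a,b)"
      using s(1) assms(1) by (simp add: sum.delta)
    finally show ?thesis by simp
  qed
  have "\<forall>s\<in>S. \<mu> s \<ge> 0" using l s(2) by (auto simp: \<mu>_def)
  moreover have "\<forall>v. c * a v + a' v = (\<Sum>s\<in>S. \<mu> s * fst (snd s) v)"
    using l 1[of "\<lambda>s. fst (snd s) v" for v] by simp
  moreover have "c * b + b' = (\<Sum>s\<in>S. \<mu> s * snd (snd s))"
    using l 1[of "\<lambda>s. snd (snd s)"] by simp
  ultimately show ?case by blast
qed

lemma farkas:
  fixes S :: "('t \<times> ('v \<Rightarrow> real) \<times> real) set"
  assumes "finite V" "finite S"
  shows "(\<exists>x. \<forall>(t,a,b)\<in>S. b \<le> (\<Sum>v\<in>V. a v * x v)) \<or>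
         (\<exists>a \<beta>. incone S a \<beta> \<and> (\<forall>v\<in>V. a v = 0) \<and> \<beta> > 0)"
  using assms
proof (induction V arbitrary: S rule: finite_induct)
  case empty
  show ?case
  proof (cases "\<forall>(t,a,b)\<in>S. b \<le> 0")
    case True then show ?thesis by auto
  next
    case False
    then obtain t a b where tab: "(t,a,b)\<in>S" "b > 0" by auto
    have "incone S a b" by (rule incone_mem[OF tab(1)])
    then show ?thesis using tab(2) by auto
  qed
next
  case (insert w V)
  define P where "P = {s\<in>S. fst (snd s) w > 0}"
  define N where "N = {s\<in>S. fst (snd s) w < 0}"
  define Z where "Z = {s\<in>S. fst (snd s) w = 0}"
  define comb where "comb = (\<lambda>(p::'t \<times> ('v \<Rightarrow> real) \<times> real, q::'t \<times> ('v \<Rightarrow> real) \<times> real).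
     (fst p, (\<lambda>v. (- fst (snd q) w) * fst (snd p) v + fst (snd p) w * fst (snd q) v),
       (- fst (snd q) w) * snd (snd p) + fst (snd p) w * snd (snd q)))"
  define S' where "S' = Z \<union> comb ` (P \<times> N)"
  have finS': "finite S'" unfolding S'_def P_def N_def Z_def using insert(4) by auto
  from insert.IH[OF finS'] show ?case
  proof
    assume "\<exists>a \<beta>. incone S' a \<beta> \<and> (\<forall>v\<in>V. a v = 0) \<and> \<beta> > 0"
    then obtain a \<beta> where a: "incone S' a \<beta>" "\<forall>v\<in>V. a v = 0" "\<beta> > 0" by blast
    have "a w = 0"
      by (rule incone_zero_at[OF _ a(1)]) (auto simp: S'_def Z_def comb_def)
    moreover have "incone S a \<beta>"
    proof (rule incone_trans[OF _ a(1)])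
      fix t a b assume "(t,a,b) \<in> S'"
      then consider "(t,a,b) \<in> Z" | p q where "p \<in> P" "q \<in> N" "(t,a,b) = comb (p,q)"
        unfolding S'_def by auto
      then show "incone S a b"
      proof cases
        case 1 then show ?thesis using incone_mem by (auto simp: Z_def)
      next
        case 2
        obtain tp ap bp where p: "p = (tp,ap,bp)" by (cases p)
        obtain tq aq bq where q: "q = (tq,aq,bq)" by (cases q)
        have pS: "(tp,ap,bp) \<in> S" "ap w > 0" using 2 p by (auto simp: P_def)
        have qS: "(tq,aq,bq) \<in> S" "aq w < 0" using 2 q by (auto simp: N_def)
        have "incone S (\<lambda>v. (- aq w) * ap v + ap w * aq v) ((- aq w) * bp + ap w * bq)"
          using incone_add[OF incone_scale[OF incone_mem[OF pS(1)], of "- aq w"]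
              incone_scale[OF incone_mem[OF qS(1)], of "ap w"]] pS qS by simp
        then show ?thesis using 2 p q by (simp add: comb_def)
      qed
    qed
    ultimately show ?thesis using a by auto
  next
    assume "\<exists>x. \<forall>(t,a,b)\<in>S'. b \<le> (\<Sum>v\<in>V. a v * x v)"
    then obtain x where x: "\<And>t a b. (t,a,b)\<in>S' \<Longrightarrow> b \<le> (\<Sum>v\<in>V. a v * x v)" by blast
    define f where "f = (\<lambda>s::'t \<times> ('v \<Rightarrow> real) \<times> real. snd (snd s) - (\<Sum>v\<in>V. fst (snd s) v * x v))"
    define lo where "lo = (\<lambda>s::'t \<times> ('v \<Rightarrow> real) \<times> real. f s / fst (snd s) w)"
    define t0 where "t0 = (if P = {} then (if N = {} then 0 else Min (lo ` N)) else Max (lo ` P))"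
    have finP: "finite P" and finN: "finite N" using insert(4) by (auto simp: P_def N_def)
    have key: "lo p \<le> lo q" if pq: "p \<in> P" "q \<in> N" for p q
    proof -
      obtain tp ap bp where p: "p = (tp,ap,bp)" by (cases p)
      obtain tq aq bq where q: "q = (tq,aq,bq)" by (cases q)
      have ap: "ap w > 0" using pq p by (auto simp: P_def)
      have aq: "aq w < 0" using pq q by (auto simp: N_def)
      have "comb (p,q) \<in> S'" using pq unfolding S'_def by auto
      from x[of tp] this have
        "(- aq w) * bp + ap w * bq \<le> (\<Sum>v\<in>V. ((- aq w) * ap v + ap w * aq v) * x v)"
        by (simp add: comb_def p q)
      also have "\<dots> = (\<Sum>v\<in>V. (- aq w) * (ap v * x v) + ap w * (aq v * x v))"
        by (rule sum.cong) (auto simp: algebra_simps)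
      also have "\<dots> = (- aq w) * (\<Sum>v\<in>V. ap v * x v) + ap w * (\<Sum>v\<in>V. aq v * x v)"
        by (simp only: sum.distrib sum_distrib_left)
      finally have h: "(- aq w) * f p + ap w * f q \<le> 0" by (simp add: f_def p q algebra_simps)
      have "f p / ap w \<le> f q / aq w"
        using h ap aq by (simp add: field_simps)
      then show ?thesis by (simp add: lo_def p q)
    qed
    have tP: "lo p \<le> t0" if "p \<in> P" for p
      using that finP by (auto simp: t0_def)
    have tN: "t0 \<le> lo q" if "q \<in> N" for q
    proof (cases "P = {}")
      case True then show ?thesis using that finN by (auto simp: t0_def)
    next
      case False then show ?thesis using that finP key by (auto simp: t0_def Max_le_iff)
    qed
    define x' where "x' = x(w := t0)"
    have sumx: "(\<Sum>v\<in>insert w V. a v * x' v) = a w * t0 + (\<Sum>v\<in>V. a v * x v)" for a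
    proof -
      have "(\<Sum>v\<in>V. a v * x' v) = (\<Sum>v\<in>V. a v * x v)"
        using insert(2) by (intro sum.cong) (auto simp: x'_def)
      then show ?thesis using insert(1,2) by (simp add: x'_def)
    qed
    have "\<forall>(t,a,b)\<in>S. b \<le> (\<Sum>v\<in>insert w V. a v * x' v)"
    proof safe
      fix t a b assume tab: "(t,a,b) \<in> S"
      consider "a w = 0" | "a w > 0" | "a w < 0" by linarith
      then show "b \<le> (\<Sum>v\<in>insert w V. a v * x' v)"
      proof cases
        case 1
        then have "(t,a,b) \<in> S'" using tab by (auto simp: S'_def Z_def)
        then show ?thesis using x 1 by (simp add: sumx)
      next
        case 2
        then have "(t,a,b) \<in> P" using tab by (auto simp: P_def)
        from tP[OF this] have "f (t,a,b) / a w \<le> t0" by (simp add: lo_def)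
        then have "f (t,a,b) \<le> a w * t0" using 2 by (simp add: divide_le_eq mult.commute)
        then show ?thesis by (simp add: sumx f_def)
      next
        case 3
        then have "(t,a,b) \<in> N" using tab by (auto simp: N_def)
        from tN[OF this] have "t0 \<le> f (t,a,b) / a w" by (simp add: lo_def)
        then have "f (t,a,b) \<le> a w * t0" using 3 by (simp add: le_divide_eq mult.commute)
        then show ?thesis by (simp add: sumx f_def)
      qed
    qed
    then show ?thesis by blast
  qed
qed



lemma (in vec_space) rank_mult_le:
  assumes X: "X \<in> carrier_mat n m" and Y: "Y \<in> carrier_mat m p"
  shows "rank (X * Y) \<le> rank X"
proof -
  have sub: "set (cols (X * Y)) \<subseteq> span (set (cols X))"
  proof
    fix x assume "x \<in> set (cols (X * Y))"
    then obtain j where j: "j < p" "x = col (X * Y) j" using X Y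
      by (metis cols_length cols_nth in_set_conv_nth index_mult_mat(3) carrier_matD(2))
    have cx: "\<forall>w \<in> set (cols X). dim_vec w = n" using X by (metis cols_dim carrier_matD(1) carrier_vecD subsetD)
    have "x = X *\<^sub>v col Y j" using j col_mult2[OF X Y j(1)] by simp
    also have "X = mat_of_cols n (cols X)" using X by (metis mat_of_cols_cols carrier_matD(1))
    also have "col Y j = vec (length (cols X)) (\<lambda>i. col Y j $ i)" using X Y by (auto)
    finally have "x = lincomb_list (\<lambda>i. col Y j $ i) (cols X)"
      using lincomb_list_as_mat_mult[OF cx] by simp
    also have "\<dots> \<in> span_list (cols X)" unfolding span_list_def by auto
    also have "span_list (cols X) = span (set (cols X))"
      by (rule span_list_as_span) (use X in \<open>metis cols_dim carrier_matD(1)\<close>)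
    finally show "x \<in> span (set (cols X))" .
  qed
  have XY: "X * Y \<in> carrier_mat n p" using X Y by auto
  have sX: "subspace class_ring (span (set (cols X))) V"
    by (metis X cols_dim carrier_matD(1) span_is_subspace)
  have sXY: "subspace class_ring (span (set (cols (X*Y)))) V"
    by (metis XY cols_dim carrier_matD(1) span_is_subspace)
  have inc: "span (set (cols (X*Y))) \<subseteq> span (set (cols X))"
    by (rule span_subsetI[OF _ sub]) (use X in \<open>metis cols_dim carrier_matD(1)\<close>)
  have subspace: "subspace class_ring (span (set (cols (X*Y)))) (vs (span (set (cols X))))"
    by (rule nested_subspaces[OF sX sXY inc])
  have f1: "vectorspace.fin_dim class_ring (vs (span (set (cols X))))" using fin_dim_span_cols[OF X] .
  have f2: "vectorspace.fin_dim class_ring (vs (span (set (cols (X*Y)))))" using fin_dim_span_cols[OF XY] .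
  show ?thesis unfolding rank_def
    using vectorspace.subspace_dim[OF subspace_is_vs[OF sX] subspace f1] f2 by auto
qed



definition tr :: "'a::comm_ring_1 mat \<Rightarrow> 'a" where "tr M = (\<Sum>i<dim_row M. M $$ (i,i))"

lemma tr_mult_entries: assumes "X \<in> carrier_mat n m" "Y \<in> carrier_mat m n"
  shows "tr (X * Y) = (\<Sum>i<n. \<Sum>k<m. X $$ (i,k) * Y $$ (k,i))"
  using assms unfolding tr_def
  by (auto simp: scalar_prod_def atLeast0LessThan intro!: sum.cong)

lemma tr_comm: assumes "X \<in> carrier_mat n m" "Y \<in> carrier_mat m n"
  shows "tr (X * Y) = tr (Y * X)"
  unfolding tr_mult_entries[OF assms] tr_mult_entries[OF assms(2,1)]
  by (subst sum.swap) (simp add: mult.commute)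

lemma sr_pos:
  fixes A :: "real mat"
  assumes A: "A \<in> carrier_mat n n" and sym: "transpose_mat A = A" and nz: "A \<noteq> 0\<^sub>m n n"
  shows "spectral_radius (map_mat complex_of_real A) > 0"
proof (rule ccontr)
  assume le: "\<not> spectral_radius (map_mat complex_of_real A) > 0"
  define Ac where "Ac = map_mat complex_of_real A"
  have Ac: "Ac \<in> carrier_mat n n" using A by (simp add: Ac_def)
  obtain i0 k0 where ik: "i0 < n" "k0 < n" "A $$ (i0,k0) \<noteq> 0"
    using nz A by (metis eq_matI carrier_matD index_zero_mat(1,2,3))
  have n: "n > 0" using ik by auto
  from char_poly_factorized[OF Ac] obtain es where cp: "char_poly Ac = (\<Prod>a\<leftarrow>es. [:- a, 1:])"
    by auto
  obtain T P Q where sd: "schur_decomposition Ac es = (T,P,Q)" by (cases "schur_decomposition Ac es") auto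
  from schur_decomposition[OF Ac cp sd] have
    sim: "similar_mat_wit Ac T P Q" and ut: "upper_triangular T" and dg: "diag_mat T = es" by auto
  from similar_mat_witD2[OF Ac sim] have T: "T \<in> carrier_mat n n" and P: "P \<in> carrier_mat n n"
    and Q: "Q \<in> carrier_mat n n" and PQ: "P * Q = 1\<^sub>m n" and QP: "Q * P = 1\<^sub>m n" and AcPTQ: "Ac = P * T * Q"
    by auto
  have es0: "e = 0" if "e \<in> set es" for e
  proof -
    have "poly (char_poly Ac) e = 0" unfolding cp by (rule linear_poly_root[OF that])
    then have "e \<in> spectrum Ac" using spectrum_root_char_poly[OF Ac] by auto
    then have "norm e \<le> spectral_radius Ac" using spectral_radius_mem_max(2)[OF Ac n] by auto
    then have "norm e \<le> 0" using le unfolding Ac_def by linarith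
    then show ?thesis by simp
  qed
  have Tii: "T $$ (i,i) = 0" if "i < n" for i
  proof -
    have "T $$ (i,i) \<in> set (diag_mat T)" using that T unfolding diag_mat_def by auto
    then show ?thesis using es0 dg by auto
  qed
  have Tz: "T $$ (i,k) * T $$ (k,i) = 0" if "i < n" "k < n" for i k
  proof -
    consider "k < i" | "i < k" | "i = k" by linarith
    then show ?thesis
    proof cases
      case 1 then show ?thesis using ut that T unfolding upper_triangular_def by auto
    next
      case 2 then show ?thesis using ut that T unfolding upper_triangular_def by auto
    next
      case 3 then show ?thesis using Tii that by auto
    qed
  qed
  have trTT: "tr (T * T) = 0" unfolding tr_mult_entries[OF T T] using Tz by (intro sum.neutral ballI) simp
  have "Ac * Ac = P * (T * (Q * P) * T) * Q"
    unfolding AcPTQ using P T Q by (simp add: assoc_mult_mat[of _ n n _ n _ n])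
  also have "T * (Q * P) * T = T * T"
    using P T Q QP by simp
  finally have "tr (Ac * Ac) = tr (P * (T * T * Q))"
    using P T Q by (simp add: assoc_mult_mat[of _ n n _ n _ n])
  also have "\<dots> = tr ((T * T * Q) * P)" by (rule tr_comm) (use P T Q in auto)
  also have "(T * T * Q) * P = T * T * (Q * P)" using P T Q by (simp add: assoc_mult_mat[of _ n n _ n _ n])
  also have "\<dots> = T * T" using QP T by simp
  finally have t0: "tr (Ac * Ac) = 0" using trTT by simp
  have t1: "tr (Ac * Ac) = complex_of_real (\<Sum>i<n. \<Sum>k<n. (A $$ (i,k))^2)"
  proof -
    have "tr (Ac * Ac) = (\<Sum>i<n. \<Sum>k<n. Ac $$ (i,k) * Ac $$ (k,i))" by (rule tr_mult_entries[OF Ac Ac])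
    also have "\<dots> = (\<Sum>i<n. \<Sum>k<n. complex_of_real ((A $$ (i,k))^2))"
    proof (intro sum.cong refl)
      fix i k assume "i \<in> {..<n}" "k \<in> {..<n}"
      moreover have "A $$ (k,i) = A $$ (i,k)"
        using sym calculation A by (metis index_transpose_mat(1) carrier_matD lessThan_iff)
      ultimately show "Ac $$ (i,k) * Ac $$ (k,i) = complex_of_real ((A $$ (i,k))^2)"
        using A by (simp add: Ac_def power2_eq_square)
    qed
    finally show ?thesis by simp
  qed
  have t2: "(\<Sum>i<n. \<Sum>k<n. (A $$ (i,k))^2) > 0"
  proof -
    have h: "(\<Sum>k<n. (A $$ (i0,k))^2) > 0"
      by (rule sum_pos2[of "{..<n}" k0]) (use ik in auto)
    show ?thesis
      by (rule sum_pos2[of "{..<n}" i0]) (use ik h in \<open>auto intro: sum_nonneg\<close>)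
  qed
  from t1 t0 have "complex_of_real (\<Sum>i<n. \<Sum>k<n. (A $$ (i,k))^2) = 0" by (simp only:)
  then have "(\<Sum>i<n. \<Sum>k<n. (A $$ (i,k))^2) = 0" by (simp only: of_real_eq_0_iff)
  then show False using t2 by simp
qed



definition bnd :: "real mat \<Rightarrow> real \<Rightarrow> bool" where
  "bnd X c \<longleftrightarrow> (\<forall>i<dim_row X. \<forall>j<dim_col X. \<bar>X $$ (i,j)\<bar> \<le> c)"

lemma bndD: "bnd X c \<Longrightarrow> i < dim_row X \<Longrightarrow> j < dim_col X \<Longrightarrow> \<bar>X $$ (i,j)\<bar> \<le> c"
  unfolding bnd_def by auto

lemma bnd_mono: "bnd X c \<Longrightarrow> c \<le> c' \<Longrightarrow> bnd X c'"
  unfolding bnd_def by force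

lemma sum_bound_aux:
  fixes f g :: "nat \<Rightarrow> real"
  assumes "\<And>k. k < m \<Longrightarrow> \<bar>f k\<bar> \<le> a" "\<And>k. k < m \<Longrightarrow> \<bar>g k\<bar> \<le> b"
  shows "\<bar>\<Sum>k<m. f k * g k\<bar> \<le> real m * (a * b)"
proof -
  have "\<bar>\<Sum>k<m. f k * g k\<bar> \<le> (\<Sum>k<m. \<bar>f k * g k\<bar>)" by (rule sum_abs)
  also have "\<dots> \<le> (\<Sum>k<m. a * b)"
  proof (rule sum_mono)
    fix k assume "k \<in> {..<m}"
    then have "\<bar>f k\<bar> \<le> a" "\<bar>g k\<bar> \<le> b" using assms by auto
    then show "\<bar>f k * g k\<bar> \<le> a * b" by (simp add: abs_mult mult_mono')
  qed
  finally show ?thesis by simp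
qed

lemma bnd_mult:
  assumes X: "X \<in> carrier_mat p m" and Y: "Y \<in> carrier_mat m q" and "bnd X a" "bnd Y b"
  shows "bnd (X * Y) (real m * (a * b))"
  unfolding bnd_def
proof (intro allI impI)
  fix i j assume ij: "i < dim_row (X * Y)" "j < dim_col (X * Y)"
  have "(X * Y) $$ (i,j) = (\<Sum>k<m. X $$ (i,k) * Y $$ (k,j))"
    using X Y ij by (auto simp: scalar_prod_def atLeast0LessThan intro!: sum.cong)
  also have "\<bar>\<dots>\<bar> \<le> real m * (a * b)"
    by (rule sum_bound_aux) (use assms ij in \<open>auto intro: bndD\<close>)
  finally show "\<bar>(X * Y) $$ (i,j)\<bar> \<le> real m * (a * b)" .
qed

lemma bnd_add: "bnd X a \<Longrightarrow> bnd Y b \<Longrightarrow> dim_row X = dim_row Y \<Longrightarrow> dim_col X = dim_col Y \<Longrightarrow> bnd (X + Y) (a + b)"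
  unfolding bnd_def by (auto intro!: order.trans[OF abs_triangle_ineq] add_mono)

lemma bnd_smult: "bnd X a \<Longrightarrow> \<bar>c\<bar> \<le> e \<Longrightarrow> a \<ge> 0 \<Longrightarrow> bnd (c \<cdot>\<^sub>m X) (e * a)"
  unfolding bnd_def by (auto simp: abs_mult intro!: mult_mono)

lemma bnd_transpose: "bnd X a \<Longrightarrow> bnd (transpose_mat X) a"
  unfolding bnd_def by auto

lemma bnd_one: "bnd (1\<^sub>m r) 1"
  unfolding bnd_def by auto

lemma bnd_exists: "\<exists>c\<ge>0. bnd X c"
proof -
  let ?S = "(\<lambda>(i,j). \<bar>X $$ (i,j)\<bar>) ` ({..<dim_row X} \<times> {..<dim_col X})"
  have "finite ?S" by auto
  show ?thesis
    by (rule exI[of _ "Max (insert 0 ?S)"]) (auto simp: bnd_def intro!: Max_ge)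
qed

lemma bnd_nonneg: "bnd X c \<Longrightarrow> dim_row X > 0 \<Longrightarrow> dim_col X > 0 \<Longrightarrow> c \<ge> 0"
  unfolding bnd_def by (meson abs_ge_zero order.trans)

lemma max_half_bound:
  fixes f :: "'i \<Rightarrow> real"
  assumes "finite I" "\<And>i. i \<in> I \<Longrightarrow> f i \<le> c + Max (f ` I) / 2"
  shows "\<And>i. i \<in> I \<Longrightarrow> f i \<le> 2 * c"
proof -
  fix i assume i: "i \<in> I"
  then have ne: "I \<noteq> {}" by auto
  have "Max (f ` I) \<in> f ` I" using assms(1) ne by auto
  then obtain j where j: "j \<in> I" "f j = Max (f ` I)" by auto
  have "Max (f ` I) \<le> 2 * c" using assms(2)[OF j(1)] j(2) by simp
  moreover have "f i \<le> Max (f ` I)" using assms(1) i by auto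
  ultimately show "f i \<le> 2 * c" by simp
qed

lemma inverse_bnd:
  fixes D :: "real mat"
  assumes D: "D \<in> carrier_mat r r" and bD: "bnd D d" and a: "0 \<le> a" and small: "a * (real r * d) \<le> 1/2"
  shows "\<exists>M \<in> carrier_mat r r. M * (1\<^sub>m r + a \<cdot>\<^sub>m D) = 1\<^sub>m r \<and> (1\<^sub>m r + a \<cdot>\<^sub>m D) * M = 1\<^sub>m r \<and> bnd M 2"
proof -
  define P where "P = 1\<^sub>m r + a \<cdot>\<^sub>m D"
  have P: "P \<in> carrier_mat r r" using D by (simp add: P_def)
  have dnn: "d \<ge> 0" if "r > 0" using bnd_nonneg[OF bD] D that by auto
  have inj: "x = 0\<^sub>v r" if x: "x \<in> carrier_vec r" "P *\<^sub>v x = 0\<^sub>v r" for x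
  proof -
    have ent: "x $ i = - a * (\<Sum>k<r. D $$ (i,k) * x $ k)" if i: "i < r" for i
    proof -
      have "(P *\<^sub>v x) $ i = x $ i + a * (\<Sum>k<r. D $$ (i,k) * x $ k)"
        using i x(1) D unfolding P_def
        by (auto simp: scalar_prod_def atLeast0LessThan sum.distrib distrib_right sum_distrib_left
            add_mult_distrib_mat_vec[of _ r r] mult.assoc intro!: sum.cong)
      moreover have "(P *\<^sub>v x) $ i = 0" using x(2) i by (simp only: index_zero_vec)
      ultimately show ?thesis by simp
    qed
    let ?f = "\<lambda>k. \<bar>x $ k\<bar>"
    have "?f i \<le> 2 * 0" if "i \<in> {..<r}" for i
    proof (rule max_half_bound[of "{..<r}" ?f 0])
      fix i assume i: "i \<in> {..<r}"
      have "\<bar>x $ i\<bar> = a * \<bar>\<Sum>k<r. D $$ (i,k) * x $ k\<bar>" using ent[of i] i a by (simp add: abs_mult)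
      also have "\<dots> \<le> a * (real r * (d * Max (?f ` {..<r})))"
        by (intro mult_left_mono sum_bound_aux a) (use i D bD in \<open>auto intro: bndD\<close>)
      also have "\<dots> = (a * (real r * d)) * Max (?f ` {..<r})" by simp
      also have "\<dots> \<le> (1/2) * Max (?f ` {..<r})"
        by (rule mult_right_mono[OF small]) (use i in \<open>auto intro: order.trans[OF abs_ge_zero Max_ge]\<close>)
      finally show "?f i \<le> 0 + Max (?f ` {..<r}) / 2" by simp
    qed (use that in auto)
    then show ?thesis using x(1) by (intro eq_vecI) auto
  qed
  have "det P \<noteq> 0" using det_0_iff_vec_prod_zero[OF P] inj by auto
  from det_non_zero_imp_unit[OF P this, of "()"]
  obtain M where M: "M \<in> carrier_mat r r" "M * P = 1\<^sub>m r" "P * M = 1\<^sub>m r"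
    unfolding Units_def ring_mat_simps by auto
  have entM: "M $$ (i,j) = (1\<^sub>m r) $$ (i,j) - a * (\<Sum>k<r. D $$ (i,k) * M $$ (k,j))"
    if ij: "i < r" "j < r" for i j
  proof -
    have "(P * M) $$ (i,j) = M $$ (i,j) + a * (\<Sum>k<r. D $$ (i,k) * M $$ (k,j))"
      using ij M(1) D unfolding P_def
      by (auto simp: add_mult_distrib_mat[of _ r r] mult_smult_assoc_mat[of _ r r]
          scalar_prod_def atLeast0LessThan intro!: sum.cong)
    moreover have "(P * M) $$ (i,j) = (1\<^sub>m r) $$ (i,j)" using M(3) by (simp only:)
    ultimately show ?thesis by simp
  qed
  let ?f = "\<lambda>(i,j). \<bar>M $$ (i,j)\<bar>"
  let ?I = "{..<r} \<times> {..<r}"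
  have "?f ij \<le> 2 * 1" if "ij \<in> ?I" for ij
  proof (rule max_half_bound[of ?I ?f 1])
    fix ij assume ij: "ij \<in> ?I"
    obtain i j where ijd: "ij = (i,j)" "i < r" "j < r" using ij by auto
    have mx: "\<bar>M $$ (k,j)\<bar> \<le> Max (?f ` ?I)" if "k < r" for k
      using that ijd by (intro Max_ge) auto
    have "\<bar>M $$ (i,j)\<bar> \<le> \<bar>(1\<^sub>m r) $$ (i,j)\<bar> + \<bar>a * (\<Sum>k<r. D $$ (i,k) * M $$ (k,j))\<bar>"
      unfolding entM[OF ijd(2,3)] by (rule abs_triangle_ineq4)
    also have "\<bar>(1\<^sub>m r :: real mat) $$ (i,j)\<bar> \<le> 1" using ijd by auto
    also have "\<bar>a * (\<Sum>k<r. D $$ (i,k) * M $$ (k,j))\<bar> \<le> a * (real r * (d * Max (?f ` ?I)))"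
      unfolding abs_mult abs_of_nonneg[OF a]
      by (intro mult_left_mono sum_bound_aux a) (use ijd D bD mx in \<open>auto intro: bndD\<close>)
    also have "a * (real r * (d * Max (?f ` ?I))) = (a * (real r * d)) * Max (?f ` ?I)" by simp
    also have "\<dots> \<le> (1/2) * Max (?f ` ?I)"
      by (rule mult_right_mono[OF small]) (use mx[OF ijd(2)] in \<open>smt (verit) abs_ge_zero\<close>)
    finally show "?f ij \<le> 1 + Max (?f ` ?I) / 2" using ijd by simp
  qed (use that in auto)
  then have "bnd M 2" using M(1) unfolding bnd_def by auto
  then show ?thesis using M P_def by auto
qed



lemma smult_smult_mat': "(a::'a::semigroup_mult) \<cdot>\<^sub>m (b \<cdot>\<^sub>m A) = (a*b) \<cdot>\<^sub>m A"
  by (rule eq_matI) (auto simp: mult.assoc)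

lemma triple_expand:
  fixes D X :: "real mat"
  assumes D: "D \<in> carrier_mat r r" and X: "X \<in> carrier_mat r r"
  shows "(1\<^sub>m r + a \<cdot>\<^sub>m D) * X * transpose_mat (1\<^sub>m r + a \<cdot>\<^sub>m D) =
     X + a \<cdot>\<^sub>m (D * X) + (a \<cdot>\<^sub>m (X * transpose_mat D) + (a*a) \<cdot>\<^sub>m (D * X * transpose_mat D))"
proof -
  have t: "transpose_mat (1\<^sub>m r + a \<cdot>\<^sub>m D) = 1\<^sub>m r + a \<cdot>\<^sub>m transpose_mat D"
    by (rule eq_matI) (use D in auto)
  have 1: "(1\<^sub>m r + a \<cdot>\<^sub>m D) * X = X + a \<cdot>\<^sub>m (D * X)"
    using D X by (simp add: add_mult_distrib_mat[of _ r r] mult_smult_assoc_mat[of _ r r])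
  have 2: "(X + a \<cdot>\<^sub>m (D * X)) * (1\<^sub>m r + a \<cdot>\<^sub>m transpose_mat D) =
      (X + a \<cdot>\<^sub>m (D * X)) + (a \<cdot>\<^sub>m (X * transpose_mat D) + (a*a) \<cdot>\<^sub>m (D * X * transpose_mat D))"
  proof -
    have "(X + a \<cdot>\<^sub>m (D * X)) * (1\<^sub>m r + a \<cdot>\<^sub>m transpose_mat D) =
        (X + a \<cdot>\<^sub>m (D * X)) * 1\<^sub>m r + (X + a \<cdot>\<^sub>m (D * X)) * (a \<cdot>\<^sub>m transpose_mat D)"
      by (rule mult_add_distrib_mat[of _ r r]) (use D X in auto)
    also have "(X + a \<cdot>\<^sub>m (D * X)) * (a \<cdot>\<^sub>m transpose_mat D) = a \<cdot>\<^sub>m (X * transpose_mat D) + (a*a) \<cdot>\<^sub>m (D * X * transpose_mat D)"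
      using D X by (simp add: mult_smult_distrib[of _ r r] add_mult_distrib_mat[of _ r r]
          mult_smult_assoc_mat[of _ r r] add_smult_distrib_left_mat[of _ r r] smult_smult_mat')
    finally show ?thesis using D X by simp
  qed
  show ?thesis unfolding t 1 2 using D X by simp
qed



datatype tg = TB nat nat | TC nat nat | TT
datatype vr = VN nat nat | VT

fun coef :: "real mat \<Rightarrow> real mat \<Rightarrow> real vec \<Rightarrow> tg \<Rightarrow> vr \<Rightarrow> real" where
  "coef B C v (TB i j) (VN k l) = (if l = j then - B $$ (i,k) else 0)"
| "coef B C v (TB i j) VT = 0"
| "coef B C v (TC i j) (VN k l) = (if k = i then C $$ (l,j) else 0) + (if k = j then C $$ (i,l) else 0)"
| "coef B C v (TC i j) VT = - (v $ i * v $ j)"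
| "coef B C v TT (VN k l) = 0"
| "coef B C v TT VT = 1"

lemma sum_grid2: "(\<Sum>p\<in>{..<a} \<times> {..<b}. g p) = (\<Sum>i<a. \<Sum>j<b. g (i,j))"
  by (simp add: sum.cartesian_product)

lemma sumV:
  "(\<Sum>w\<in>insert VT ((\<lambda>(k,l). VN k l) ` ({..<r} \<times> {..<r})). g w) = (\<Sum>k<r. \<Sum>l<r. g (VN k l)) + g VT"
proof -
  have inj: "inj_on (\<lambda>(k,l). VN k l) ({..<r} \<times> {..<r})" by (auto simp: inj_on_def)
  have "(\<Sum>w\<in>insert VT ((\<lambda>(k,l). VN k l) ` ({..<r} \<times> {..<r})). g w) =
     (\<Sum>w\<in>(\<lambda>(k,l). VN k l) ` ({..<r} \<times> {..<r}). g w) + g VT"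
    by (subst sum.insert) (auto simp: add.commute)
  also have "(\<Sum>w\<in>(\<lambda>(k,l). VN k l) ` ({..<r} \<times> {..<r}). g w) = (\<Sum>p\<in>{..<r} \<times> {..<r}. g (case p of (k,l) \<Rightarrow> VN k l))"
    by (subst sum.reindex[OF inj]) (simp add: o_def)
  also have "\<dots> = (\<Sum>k<r. \<Sum>l<r. g (VN k l))" by (simp add: sum_grid2)
  finally show ?thesis .
qed

lemma sumK:
  assumes "K \<subseteq> (\<lambda>(i,j). TB i j) ` ({..<n} \<times> {..<r}) \<union> (\<lambda>(i,j). TC i j) ` ({..<r} \<times> {..<r}) \<union> {TT}"
  shows "(\<Sum>k\<in>K. f k) = (\<Sum>i<n. \<Sum>j<r. if TB i j \<in> K then f (TB i j) else 0)
     + (\<Sum>i<r. \<Sum>j<r. if TC i j \<in> K then f (TC i j) else 0) + (if TT \<in> K then f TT else 0)"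
proof -
  let ?G = "(\<lambda>(i,j). TB i j) ` ({..<n} \<times> {..<r}) \<union> (\<lambda>(i,j). TC i j) ` ({..<r} \<times> {..<r}) \<union> {TT}"
  let ?g = "\<lambda>k. if k \<in> K then f k else 0"
  have "(\<Sum>k\<in>K. f k) = (\<Sum>k\<in>?G. ?g k)"
    by (rule sum.mono_neutral_cong_left) (use assms in auto)
  also have "\<dots> = (\<Sum>k\<in>(\<lambda>(i,j). TB i j) ` ({..<n} \<times> {..<r}). ?g k) + (\<Sum>k\<in>(\<lambda>(i,j). TC i j) ` ({..<r} \<times> {..<r}). ?g k) + ?g TT"
    by (subst sum.union_disjoint; auto)+
  also have "(\<Sum>k\<in>(\<lambda>(i,j). TB i j) ` ({..<n} \<times> {..<r}). ?g k) = (\<Sum>i<n. \<Sum>j<r. ?g (TB i j))"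
    by (subst sum.reindex) (auto simp: inj_on_def sum.cartesian_product split_def)
  also have "(\<Sum>k\<in>(\<lambda>(i,j). TC i j) ` ({..<r} \<times> {..<r}). ?g k) = (\<Sum>i<r. \<Sum>j<r. ?g (TC i j))"
    by (subst sum.reindex) (auto simp: inj_on_def sum.cartesian_product split_def)
  finally show ?thesis by simp
qed

lemma mult_entry: "X \<in> carrier_mat p m \<Longrightarrow> Y \<in> carrier_mat m q \<Longrightarrow> i < p \<Longrightarrow> j < q \<Longrightarrow>
   (X * Y) $$ (i,j) = (\<Sum>k<m. X $$ (i,k) * Y $$ (k,j))"
  by (auto simp: scalar_prod_def atLeast0LessThan intro!: sum.cong)

lemma sum_if_eq: "j < (r::nat) \<Longrightarrow> (\<Sum>l<r. if l = j then f l else 0) = (f j :: real)"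
  by (simp add: sum.delta sum.delta')

lemma if_mult0: "(if P then a * c else 0) = (if P then a else 0) * (c::real)" by simp

lemma sum_sum_if: "i < (r::nat) \<Longrightarrow> (\<Sum>k<r. \<Sum>l<(m::nat). if k = i then g k l else (0::real)) = (\<Sum>l<m. g i l)"
proof -
  assume i: "i < r"
  have "(\<Sum>k<r. \<Sum>l<m. if k = i then g k l else (0::real)) = (\<Sum>k<r. if k = i then (\<Sum>l<m. g k l) else 0)"
    by (rule sum.cong) auto
  also have "\<dots> = (\<Sum>l<m. g i l)" using i by (subst sum.delta) auto
  finally show ?thesis .
qed

lemma farkas_app:
  fixes B C :: "real mat" and v :: "real vec"
  assumes B: "B \<in> carrier_mat n r" and C: "C \<in> carrier_mat r r" and Csym: "transpose_mat C = C"
    and hyp: "\<forall>X W. X \<in> carrier_mat n r \<and> nonneg_mat X \<and> W \<in> carrier_mat r r \<and> nonneg_mat W \<and>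
            transpose_mat W = W \<and> hadamard X B = 0\<^sub>m n r \<and> hadamard W C = 0\<^sub>m r r \<and>
            W * C = transpose_mat B * X \<longrightarrow> X = 0\<^sub>m n r \<and> W = 0\<^sub>m r r"
  shows "\<exists>D \<delta>. D \<in> carrier_mat r r \<and> \<delta> > 0 \<and>
     (\<forall>i<n. \<forall>j<r. B $$ (i,j) = 0 \<and> (\<exists>k<r. B $$ (i,k) \<noteq> 0) \<longrightarrow> \<delta> \<le> - (B * D) $$ (i,j)) \<and>
     (\<forall>i<r. \<forall>j<r. C $$ (i,j) = 0 \<longrightarrow> \<delta> \<le> (D * C + C * transpose_mat D) $$ (i,j) - v $ i * v $ j)"
proof -
  define K where "K = {TB i j | i j. i < n \<and> j < r \<and> B $$ (i,j) = 0 \<and> (\<exists>k<r. B $$ (i,k) \<noteq> 0)}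
     \<union> {TC i j | i j. i < r \<and> j < r \<and> C $$ (i,j) = 0} \<union> {TT}"
  define V where "V = insert VT ((\<lambda>(k,l). VN k l) ` ({..<r} \<times> {..<r}))"
  define S where "S = (\<lambda>k. (k, coef B C v k, 1::real)) ` K"
  have memTB: "TB i j \<in> K \<longleftrightarrow> i < n \<and> j < r \<and> B $$ (i,j) = 0 \<and> (\<exists>k<r. B $$ (i,k) \<noteq> 0)" for i j
    by (auto simp: K_def)
  have memTC: "TC i j \<in> K \<longleftrightarrow> i < r \<and> j < r \<and> C $$ (i,j) = 0" for i j
    by (auto simp: K_def)
  have memTT: "TT \<in> K" by (auto simp: K_def)
  have Ksub: "K \<subseteq> (\<lambda>(i,j). TB i j) ` ({..<n} \<times> {..<r}) \<union> (\<lambda>(i,j). TC i j) ` ({..<r} \<times> {..<r}) \<union> {TT}"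
    by (auto simp: K_def)
  have finK: "finite K" by (rule finite_subset[OF Ksub]) auto
  have finS: "finite S" using finK by (simp add: S_def)
  have finV: "finite V" by (simp add: V_def)
  have Cs: "C $$ (i,j) = C $$ (j,i)" if "i < r" "j < r" for i j
    using Csym that C by (metis index_transpose_mat(1) carrier_matD)
  from farkas[OF finV finS] show ?thesis
  proof
    assume "\<exists>x. \<forall>(t,a,b)\<in>S. b \<le> (\<Sum>w\<in>V. a w * x w)"
    then obtain x where x: "\<And>k. k \<in> K \<Longrightarrow> 1 \<le> (\<Sum>w\<in>V. coef B C v k w * x w)"
      unfolding S_def by auto
    define D0 where "D0 = mat r r (\<lambda>(k,l). x (VN k l))"
    define t where "t = x VT"
    have D0: "D0 \<in> carrier_mat r r" by (simp add: D0_def)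
    have t1: "1 \<le> t" using x[OF memTT] by (simp add: V_def sumV t_def)
    define D where "D = (1/t) \<cdot>\<^sub>m D0"
    have D: "D \<in> carrier_mat r r" by (simp add: D_def D0_def)
    show ?thesis
    proof (intro exI[of _ D] exI[of _ "1/t"] conjI allI impI)
      show "D \<in> carrier_mat r r" by (rule D)
      show "0 < 1/t" using t1 by simp
    next
      fix i j assume ij: "i < n" "j < r" and h: "B $$ (i,j) = 0 \<and> (\<exists>k<r. B $$ (i,k) \<noteq> 0)"
      then have "TB i j \<in> K" by (simp add: memTB)
      from x[OF this] have "1 \<le> (\<Sum>k<r. \<Sum>l<r. (if l = j then - B $$ (i,k) else 0) * x (VN k l))"
        by (simp add: V_def sumV)
      also have "\<dots> = (\<Sum>k<r. - B $$ (i,k) * x (VN k j))"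
        by (rule sum.cong) (use ij in \<open>auto simp: if_distrib[of "\<lambda>z. z * _"] cong: if_cong\<close>)
      also have "\<dots> = - (B * D0) $$ (i,j)"
        using ij by (subst mult_entry[OF B D0 ij]) (simp add: D0_def sum_negf)
      finally have "1 \<le> - (B * D0) $$ (i,j)" .
      moreover have "(B * D) $$ (i,j) = (1/t) * (B * D0) $$ (i,j)"
        using ij B D0 by (simp add: D_def mult_smult_distrib[OF B D0])
      ultimately show "1/t \<le> - (B * D) $$ (i,j)" using t1 by (simp add: field_simps)
    next
      fix i j assume ij: "i < r" "j < r" and h: "C $$ (i,j) = 0"
      then have "TC i j \<in> K" by (simp add: memTC)
      from x[OF this] have "1 \<le> (\<Sum>k<r. \<Sum>l<r. ((if k = i then C $$ (l,j) else 0) + (if k = j then C $$ (i,l) else 0)) * x (VN k l))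
          - v $ i * v $ j * t"
        by (simp add: V_def sumV t_def)
      also have "(\<Sum>k<r. \<Sum>l<r. ((if k = i then C $$ (l,j) else 0) + (if k = j then C $$ (i,l) else 0)) * x (VN k l))
          = (\<Sum>k<r. \<Sum>l<r. (if k = i then C $$ (l,j) * x (VN k l) else 0))
          + (\<Sum>k<r. \<Sum>l<r. (if k = j then C $$ (i,l) * x (VN k l) else 0))"
      proof -
        have "(\<Sum>k<r. \<Sum>l<r. ((if k = i then C $$ (l,j) else 0) + (if k = j then C $$ (i,l) else 0)) * x (VN k l))
          = (\<Sum>k<r. \<Sum>l<r. (if k = i then C $$ (l,j) * x (VN k l) else 0) + (if k = j then C $$ (i,l) * x (VN k l) else 0))"
          by (intro sum.cong refl) (auto simp: distrib_right)
        then show ?thesis by (simp only: sum.distrib)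
      qed
      also have "(\<Sum>k<r. \<Sum>l<r. (if k = i then C $$ (l,j) * x (VN k l) else 0)) = (\<Sum>l<r. C $$ (l,j) * x (VN i l))"
        by (rule sum_sum_if[OF ij(1)])
      also have "\<dots> = (D0 * C) $$ (i,j)"
        using ij by (subst mult_entry[OF D0 C ij]) (simp add: D0_def mult.commute)
      also have "(\<Sum>k<r. \<Sum>l<r. (if k = j then C $$ (i,l) * x (VN k l) else 0)) = (\<Sum>l<r. C $$ (i,l) * x (VN j l))"
        by (rule sum_sum_if[OF ij(2)])
      also have "\<dots> = (C * transpose_mat D0) $$ (i,j)"
        using ij C D0 by (subst mult_entry[of C r r "transpose_mat D0" r]) (auto simp: D0_def)
      finally have h1: "1 \<le> (D0 * C) $$ (i,j) + (C * transpose_mat D0) $$ (i,j) - v $ i * v $ j * t" .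
      have "(D * C + C * transpose_mat D) $$ (i,j) = (1/t) * ((D0 * C) $$ (i,j) + (C * transpose_mat D0) $$ (i,j))"
        using ij C D0 by (simp add: D_def mult_smult_assoc_mat[OF D0 C] mult_smult_distrib[of C r r] distrib_left)
      then show "1/t \<le> (D * C + C * transpose_mat D) $$ (i,j) - v $ i * v $ j"
        using h1 t1 by (simp add: field_simps)
    qed
  next
    assume "\<exists>a \<beta>. incone S a \<beta> \<and> (\<forall>w\<in>V. a w = 0) \<and> \<beta> > 0"
    then obtain a \<beta> where a: "incone S a \<beta>" "\<forall>w\<in>V. a w = 0" "\<beta> > 0" by blast
    from incone_lambda[OF finS a(1)] obtain l where
      l: "\<forall>s\<in>S. l s \<ge> 0" "\<forall>w. a w = (\<Sum>s\<in>S. l s * fst (snd s) w)" "\<beta> = (\<Sum>s\<in>S. l s * snd (snd s))"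
      by blast
    define lam where "lam = (\<lambda>k. l (k, coef B C v k, 1::real))"
    have inj: "inj_on (\<lambda>k. (k, coef B C v k, 1::real)) K" by (auto simp: inj_on_def)
    have lam0: "lam k \<ge> 0" if "k \<in> K" for k using l(1) that by (auto simp: lam_def S_def)
    have aw: "a w = (\<Sum>k\<in>K. lam k * coef B C v k w)" for w
      using l(2) by (simp add: S_def sum.reindex[OF inj] lam_def)
    have beta: "\<beta> = (\<Sum>k\<in>K. lam k)"
      using l(3) by (simp add: S_def sum.reindex[OF inj] lam_def)
    define X where "X = mat n r (\<lambda>(i,j). if TB i j \<in> K then lam (TB i j) else 0)"
    define W' where "W' = mat r r (\<lambda>(i,j). if TC i j \<in> K then lam (TC i j) else 0)"
    define W where "W = W' + transpose_mat W'"
    have X: "X \<in> carrier_mat n r" by (simp add: X_def)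
    have W': "W' \<in> carrier_mat r r" by (simp add: W'_def)
    have W: "W \<in> carrier_mat r r" by (simp add: W_def W'_def)
    have Xe: "X $$ (i,j) = (if TB i j \<in> K then lam (TB i j) else 0)" if "i < n" "j < r" for i j
      using that by (simp add: X_def)
    have W'e: "W' $$ (i,j) = (if TC i j \<in> K then lam (TC i j) else 0)" if "i < r" "j < r" for i j
      using that by (simp add: W'_def)
    have We: "W $$ (i,j) = W' $$ (i,j) + W' $$ (j,i)" if "i < r" "j < r" for i j
      using that by (simp add: W_def W'_def)
    have Xnn: "X $$ (i,j) \<ge> 0" if "i < n" "j < r" for i j using that lam0 by (simp add: Xe)
    have W'nn: "W' $$ (i,j) \<ge> 0" if "i < r" "j < r" for i j using that lam0 by (simp add: W'e)
    have sK: "(\<Sum>k\<in>K. lam k * coef B C v k w) =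
        (\<Sum>i<n. \<Sum>j<r. X $$ (i,j) * coef B C v (TB i j) w)
      + (\<Sum>i<r. \<Sum>j<r. W' $$ (i,j) * coef B C v (TC i j) w) + lam TT * coef B C v TT w" for w
      unfolding sumK[OF Ksub] using memTT by (simp add: Xe W'e if_mult0)
    have eq1: "(\<Sum>i<n. X $$ (i,l0) * B $$ (i,k0)) =
       (\<Sum>j<r. W' $$ (k0,j) * C $$ (l0,j)) + (\<Sum>i<r. W' $$ (i,k0) * C $$ (i,l0))"
      if kl: "k0 < r" "l0 < r" for k0 l0
    proof -
      have "0 = a (VN k0 l0)" using a(2) kl by (auto simp: V_def)
      also have "\<dots> = (\<Sum>i<n. \<Sum>j<r. X $$ (i,j) * (if l0 = j then - B $$ (i,k0) else 0))
         + (\<Sum>i<r. \<Sum>j<r. W' $$ (i,j) * ((if k0 = i then C $$ (l0,j) else 0) + (if k0 = j then C $$ (i,l0) else 0)))"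
        by (simp add: aw sK)
      also have "(\<Sum>i<n. \<Sum>j<r. X $$ (i,j) * (if l0 = j then - B $$ (i,k0) else 0)) = - (\<Sum>i<n. X $$ (i,l0) * B $$ (i,k0))"
        using kl by (simp add: if_distrib[of "\<lambda>z. _ * z"] sum.delta' sum_negf cong: if_cong)
      also have "(\<Sum>i<r. \<Sum>j<r. W' $$ (i,j) * ((if k0 = i then C $$ (l0,j) else 0) + (if k0 = j then C $$ (i,l0) else 0)))
         = (\<Sum>j<r. W' $$ (k0,j) * C $$ (l0,j)) + (\<Sum>i<r. W' $$ (i,k0) * C $$ (i,l0))"
      proof -
        have "(\<Sum>i<r. \<Sum>j<r. W' $$ (i,j) * ((if k0 = i then C $$ (l0,j) else 0) + (if k0 = j then C $$ (i,l0) else 0)))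
          = (\<Sum>i<r. \<Sum>j<r. (if i = k0 then W' $$ (i,j) * C $$ (l0,j) else 0)) + (\<Sum>i<r. \<Sum>j<r. (if j = k0 then W' $$ (i,j) * C $$ (i,l0) else 0))"
          by (simp only: sum.distrib[symmetric]) (intro sum.cong refl, auto simp: distrib_left)
        also have "(\<Sum>i<r. \<Sum>j<r. (if i = k0 then W' $$ (i,j) * C $$ (l0,j) else 0)) = (\<Sum>j<r. W' $$ (k0,j) * C $$ (l0,j))"
          by (rule sum_sum_if[OF kl(1)])
        also have "(\<Sum>i<r. \<Sum>j<r. (if j = k0 then W' $$ (i,j) * C $$ (i,l0) else 0)) = (\<Sum>i<r. W' $$ (i,k0) * C $$ (i,l0))"
          using kl by (intro sum.cong refl) (simp add: sum.delta)
        finally show ?thesis .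
      qed
      finally show ?thesis by simp
    qed
    have eq2: "lam TT = (\<Sum>i<r. \<Sum>j<r. W' $$ (i,j) * (v $ i * v $ j))"
    proof -
      have "0 = a VT" using a(2) by (auto simp: V_def)
      also have "\<dots> = - (\<Sum>i<r. \<Sum>j<r. W' $$ (i,j) * (v $ i * v $ j)) + lam TT"
        by (simp add: aw sK sum_negf)
      finally show ?thesis by simp
    qed
    have eq3: "\<beta> = (\<Sum>i<n. \<Sum>j<r. X $$ (i,j)) + (\<Sum>i<r. \<Sum>j<r. W' $$ (i,j)) + lam TT"
      unfolding beta sumK[OF Ksub] using memTT by (simp add: Xe W'e cong: if_cong)
    have "X = 0\<^sub>m n r \<and> W = 0\<^sub>m r r"
    proof (rule hyp[rule_format], intro conjI)
      show "X \<in> carrier_mat n r" "W \<in> carrier_mat r r" by (fact X, fact W)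
      show "nonneg_mat X" using Xnn X unfolding nonneg_mat_def by auto
      show "nonneg_mat W" using W'nn W unfolding nonneg_mat_def by (auto simp: We)
      show "transpose_mat W = W" by (rule eq_matI) (use W in \<open>auto simp: We\<close>)
      show "hadamard X B = 0\<^sub>m n r"
        by (rule eq_matI) (use X B in \<open>auto simp: hadamard_def Xe memTB\<close>)
      show "hadamard W C = 0\<^sub>m r r"
        by (rule eq_matI) (use W C Cs in \<open>auto simp: hadamard_def We W'e memTC\<close>)
      show "W * C = transpose_mat B * X"
      proof (rule eq_matI)
        fix k0 l0 assume kl: "k0 < dim_row (transpose_mat B * X)" "l0 < dim_col (transpose_mat B * X)"
        then have kl': "k0 < r" "l0 < r" using B X by auto
        have "(W * C) $$ (k0,l0) = (\<Sum>j<r. (W' $$ (k0,j) + W' $$ (j,k0)) * C $$ (j,l0))"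
          using kl' by (subst mult_entry[OF W C kl']) (simp add: We)
        also have "\<dots> = (\<Sum>j<r. W' $$ (k0,j) * C $$ (l0,j)) + (\<Sum>i<r. W' $$ (i,k0) * C $$ (i,l0))"
          using kl' Cs by (simp add: distrib_right sum.distrib)
        also have "\<dots> = (\<Sum>i<n. X $$ (i,l0) * B $$ (i,k0))" using eq1[OF kl'] by simp
        also have "\<dots> = (transpose_mat B * X) $$ (k0,l0)"
          using kl' B X by (subst mult_entry[of "transpose_mat B" r n X r]) (auto simp: mult.commute)
        finally show "(W * C) $$ (k0,l0) = (transpose_mat B * X) $$ (k0,l0)" .
      qed (use W C B X in auto)
    qed
    then have X0: "X $$ (i,j) = 0" if "i < n" "j < r" for i j using that by auto
    have W'0: "W' $$ (i,j) = 0" if "i < r" "j < r" for i j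
    proof -
      have "W $$ (i,j) = 0" using \<open>X = 0\<^sub>m n r \<and> W = 0\<^sub>m r r\<close> that by auto
      then show ?thesis using We[OF that] W'nn[OF that] W'nn[OF that(2,1)] by simp
    qed
    have "\<beta> = 0" using eq3 eq2 X0 W'0 by simp
    then show ?thesis using a(3) by simp
  qed
qed



lemma small_mult: "0 \<le> x \<Longrightarrow> x \<le> Kc \<Longrightarrow> 0 < \<alpha> \<Longrightarrow> \<alpha> \<le> \<delta> / (Kc + 1) \<Longrightarrow> 0 < \<delta> \<Longrightarrow> \<alpha> * x \<le> (\<delta>::real)"
proof -
  assume h: "0 \<le> x" "x \<le> Kc" "0 < \<alpha>" "\<alpha> \<le> \<delta> / (Kc + 1)" "0 < \<delta>"
  have "\<alpha> * x \<le> (\<delta> / (Kc + 1)) * x" using h by (intro mult_right_mono) auto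
  also have "\<dots> \<le> (\<delta> / (Kc + 1)) * (Kc + 1)" using h by (intro mult_left_mono) auto
  also have "\<dots> = \<delta>" using h by simp
  finally show ?thesis .
qed

lemma outer_carrier: "v \<in> carrier_vec r \<Longrightarrow> outer v \<in> carrier_mat r r"
  by (simp add: outer_def)

lemma outer_index: "i < dim_vec v \<Longrightarrow> j < dim_vec v \<Longrightarrow> outer v $$ (i,j) = v $ i * v $ j"
  by (simp add: outer_def)

lemma outer_sym: "transpose_mat (outer v) = outer v"
  by (rule eq_matI) (auto simp: outer_def)

lemma nonneg_mult: "X \<in> carrier_mat p m \<Longrightarrow> Y \<in> carrier_mat m q \<Longrightarrow> nonneg_mat X \<Longrightarrow> nonneg_mat Y \<Longrightarrow> nonneg_mat (X * Y)"
  unfolding nonneg_mat_def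
  by (auto simp: scalar_prod_def intro!: sum_nonneg)

lemma min_pos_exists:
  fixes f :: "nat \<Rightarrow> nat \<Rightarrow> real"
  shows "\<exists>m>0. \<forall>i<a. \<forall>j<b. f i j > 0 \<longrightarrow> m \<le> f i j"
proof -
  let ?S = "insert 1 {f i j | i j. i < a \<and> j < b \<and> f i j > 0}"
  have fin: "finite ?S"
  proof -
    have "{f i j | i j. i < a \<and> j < b \<and> f i j > 0} \<subseteq> (\<lambda>(i,j). f i j) ` ({..<a} \<times> {..<b})" by auto
    then show ?thesis by (simp add: finite_subset)
  qed
  have "Min ?S > 0" using fin by (subst Min_gr_iff) auto
  moreover have "\<forall>i<a. \<forall>j<b. f i j > 0 \<longrightarrow> Min ?S \<le> f i j" using fin by (auto intro!: Min_le)
  ultimately show ?thesis by blast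
qed

lemma perturb:
  fixes B C D :: "real mat" and v :: "real vec"
  assumes B: "B \<in> carrier_mat n r" and Bnn: "nonneg_mat B" and C: "C \<in> carrier_mat r r"
    and Cnn: "nonneg_mat C" and Csym: "transpose_mat C = C"
    and D: "D \<in> carrier_mat r r" and v: "v \<in> carrier_vec r" and \<delta>: "\<delta> > 0"
    and FB: "\<forall>i<n. \<forall>j<r. B $$ (i,j) = 0 \<and> (\<exists>k<r. B $$ (i,k) \<noteq> 0) \<longrightarrow> \<delta> \<le> - (B * D) $$ (i,j)"
    and FC: "\<forall>i<r. \<forall>j<r. C $$ (i,j) = 0 \<longrightarrow> \<delta> \<le> (D * C + C * transpose_mat D) $$ (i,j) - v $ i * v $ j"
    and \<alpha>1: "\<alpha>1 > 0"
  shows "\<exists>\<alpha> B' C'. 0 < \<alpha> \<and> \<alpha> \<le> \<alpha>1 \<and> B' \<in> carrier_mat n r \<and> nonneg_mat B' \<and> C' \<in> symnn r \<and>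
      B' * C' * transpose_mat B' = B * (C + (-\<alpha>) \<cdot>\<^sub>m outer v) * transpose_mat B"
proof -
  define V where "V = outer v"
  have V: "V \<in> carrier_mat r r" using v by (simp add: V_def outer_carrier)
  have Ve: "V $$ (i,j) = v $ i * v $ j" if "i < r" "j < r" for i j using that v by (simp add: V_def outer_index)
  have Vsym: "transpose_mat V = V" by (simp add: V_def outer_sym)
  obtain d where d: "d \<ge> 0" "bnd D d" using bnd_exists by blast
  obtain c where c: "c \<ge> 0" "bnd C c" using bnd_exists by blast
  obtain v2 where v2: "v2 \<ge> 0" "bnd V v2" using bnd_exists by blast
  obtain bb where bb: "bb \<ge> 0" "bnd B bb" using bnd_exists by blast
  define h0 where "h0 = real r * (real r * (d * (c + v2)) * d) + real r * (d * v2) + real r * (v2 * d)"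
  define e1 where "e1 = real r * (bb * d)"
  define e2 where "e2 = real r * (bb * (real r * (real r * (2 * d) * d)))"
  define g0 where "g0 = real r * (d * c) + real r * (c * d) + v2"
  have h0: "h0 \<ge> 0" "e1 \<ge> 0" "e2 \<ge> 0" "g0 \<ge> 0" using d c v2 bb by (auto simp: h0_def e1_def e2_def g0_def)
  obtain cmin where cmin: "cmin > 0" "\<forall>i<r. \<forall>j<r. C $$ (i,j) > 0 \<longrightarrow> cmin \<le> C $$ (i,j)"
    using min_pos_exists[of r r "\<lambda>i j. C $$ (i,j)"] by blast
  obtain bmin where bmin: "bmin > 0" "\<forall>i<n. \<forall>j<r. B $$ (i,j) > 0 \<longrightarrow> bmin \<le> B $$ (i,j)"
    using min_pos_exists[of n r "\<lambda>i j. B $$ (i,j)"] by blast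
  define Kc where "Kc = h0 + e1 + e2 + g0"
  have Kc: "Kc \<ge> 0" using h0 by (simp add: Kc_def)
  define \<alpha> where "\<alpha> = min \<alpha>1 (min 1 (min (1 / (2 * (real r * d + 1))) (min (\<delta> / (Kc + 1))
      (min (cmin / (Kc + 1)) (bmin / (Kc + 1))))))"
  have rd: "real r * d \<ge> 0" using d by simp
  have \<alpha>: "0 < \<alpha>" "\<alpha> \<le> \<alpha>1" "\<alpha> \<le> 1" "\<alpha> \<le> \<delta> / (Kc + 1)" "\<alpha> \<le> cmin / (Kc + 1)" "\<alpha> \<le> bmin / (Kc + 1)"
    "\<alpha> \<le> 1 / (2 * (real r * d + 1))"
    using \<alpha>1 \<delta> cmin bmin Kc rd unfolding \<alpha>_def by auto
  have \<alpha>rd: "\<alpha> * (real r * d) \<le> 1/2"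
  proof -
    have "\<alpha> * (real r * d) \<le> (1 / (2 * (real r * d + 1))) * (real r * d)"
      using \<alpha> rd by (intro mult_right_mono) auto
    also have "\<dots> \<le> 1/2" using rd by (simp add: field_simps)
    finally show ?thesis .
  qed
  from inverse_bnd[OF D d(2) _ \<alpha>rd] \<alpha>(1) obtain M where
    M: "M \<in> carrier_mat r r" "M * (1\<^sub>m r + \<alpha> \<cdot>\<^sub>m D) = 1\<^sub>m r" "(1\<^sub>m r + \<alpha> \<cdot>\<^sub>m D) * M = 1\<^sub>m r" "bnd M 2"
    by auto
  define P where "P = 1\<^sub>m r + \<alpha> \<cdot>\<^sub>m D"
  have P: "P \<in> carrier_mat r r" using D by (simp add: P_def)
  define X where "X = C + (-\<alpha>) \<cdot>\<^sub>m V"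
  have X: "X \<in> carrier_mat r r" using C V by (simp add: X_def)
  define C' where "C' = P * X * transpose_mat P"
  define B' where "B' = B * M"
  have C': "C' \<in> carrier_mat r r" using P X by (simp add: C'_def)
  have B': "B' \<in> carrier_mat n r" using B M by (simp add: B'_def)
  have bX: "bnd X (c + 1 * v2)"
    unfolding X_def by (rule bnd_add[OF c(2) bnd_smult[OF v2(2)]]) (use \<alpha> C V v2 in auto)
  have exp: "C' = X + \<alpha> \<cdot>\<^sub>m (D * X) + (\<alpha> \<cdot>\<^sub>m (X * transpose_mat D) + (\<alpha>*\<alpha>) \<cdot>\<^sub>m (D * X * transpose_mat D))"
    unfolding C'_def P_def by (rule triple_expand[OF D X])
  have DX: "D * X = D * C + (-\<alpha>) \<cdot>\<^sub>m (D * V)"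
    unfolding X_def using D C V by (simp add: mult_add_distrib_mat[of _ r r] mult_smult_distrib[of _ r r])
  have XD: "X * transpose_mat D = C * transpose_mat D + (-\<alpha>) \<cdot>\<^sub>m (V * transpose_mat D)"
    unfolding X_def using D C V by (simp add: add_mult_distrib_mat[of _ r r] mult_smult_assoc_mat[of _ r r])
  define R where "R = D * X * transpose_mat D - D * V - V * transpose_mat D"
  have R: "R \<in> carrier_mat r r" unfolding R_def by (rule minus_carrier_mat) (use V D in simp)
  have C'e: "C' $$ (i,j) = C $$ (i,j) + \<alpha> * ((D * C + C * transpose_mat D) $$ (i,j) - v $ i * v $ j) + (\<alpha>*\<alpha>) * R $$ (i,j)"
    if ij: "i < r" "j < r" for i j
  proof -
    have "C' $$ (i,j) = X $$ (i,j) + \<alpha> * (D * X) $$ (i,j) + (\<alpha> * (X * transpose_mat D) $$ (i,j) + (\<alpha>*\<alpha>) * (D * X * transpose_mat D) $$ (i,j))"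
      unfolding exp using ij D X by simp
    also have "(D * X) $$ (i,j) = (D * C) $$ (i,j) - \<alpha> * (D * V) $$ (i,j)"
      unfolding DX using ij D C V by simp
    also have "(X * transpose_mat D) $$ (i,j) = (C * transpose_mat D) $$ (i,j) - \<alpha> * (V * transpose_mat D) $$ (i,j)"
      unfolding XD using ij D C V by simp
    also have "X $$ (i,j) = C $$ (i,j) - \<alpha> * (v $ i * v $ j)"
      unfolding X_def using ij C V Ve by simp
    finally show ?thesis
      using ij D C V X by (simp add: R_def algebra_simps)
  qed
  have bR: "\<bar>R $$ (i,j)\<bar> \<le> h0" if ij: "i < r" "j < r" for i j
  proof -
    have b1: "bnd (D * X * transpose_mat D) (real r * (real r * (d * (c + 1 * v2)) * d))"
      by (rule bnd_mult[OF _ _ bnd_mult[OF D X d(2) bX] bnd_transpose[OF d(2)]]) (use D X in auto)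
    have b2: "bnd (D * V) (real r * (d * v2))" by (rule bnd_mult[OF D V d(2) v2(2)])
    have b3: "bnd (V * transpose_mat D) (real r * (v2 * d))"
      by (rule bnd_mult[OF V _ v2(2) bnd_transpose[OF d(2)]]) (use D in auto)
    have "\<bar>R $$ (i,j)\<bar> \<le> \<bar>(D * X * transpose_mat D) $$ (i,j)\<bar> + \<bar>(D * V) $$ (i,j)\<bar> + \<bar>(V * transpose_mat D) $$ (i,j)\<bar>"
      unfolding R_def using ij D X V by simp
    also have "\<dots> \<le> real r * (real r * (d * (c + 1 * v2)) * d) + real r * (d * v2) + real r * (v2 * d)"
      by (intro add_mono bndD[OF b1] bndD[OF b2] bndD[OF b3]) (use ij D X V in auto)
    finally show ?thesis by (simp add: h0_def algebra_simps)
  qed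
  have bG: "\<bar>(D * C + C * transpose_mat D) $$ (i,j) - v $ i * v $ j\<bar> \<le> g0" if ij: "i < r" "j < r" for i j
  proof -
    have b1: "bnd (D * C) (real r * (d * c))" by (rule bnd_mult[OF D C d(2) c(2)])
    have b2: "bnd (C * transpose_mat D) (real r * (c * d))"
      by (rule bnd_mult[OF C _ c(2) bnd_transpose[OF d(2)]]) (use D in auto)
    have "\<bar>(D * C + C * transpose_mat D) $$ (i,j) - v $ i * v $ j\<bar> \<le> \<bar>(D * C) $$ (i,j)\<bar> + \<bar>(C * transpose_mat D) $$ (i,j)\<bar> + \<bar>V $$ (i,j)\<bar>"
      using ij D C Ve by simp
    also have "\<dots> \<le> real r * (d * c) + real r * (c * d) + v2"
      by (intro add_mono bndD[OF b1] bndD[OF b2] bndD[OF v2(2)]) (use ij D C V in auto)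
    finally show ?thesis by (simp add: g0_def)
  qed
  have C'nn: "C' $$ (i,j) \<ge> 0" if ij: "i < r" "j < r" for i j
  proof -
    let ?G = "(D * C + C * transpose_mat D) $$ (i,j) - v $ i * v $ j"
    have aR: "\<alpha> * \<bar>R $$ (i,j)\<bar> \<le> \<alpha> * h0" using bR[OF ij] \<alpha> by (intro mult_left_mono) auto
    have "(\<alpha>*\<alpha>) * R $$ (i,j) \<ge> - (\<alpha> * (\<alpha> * h0))"
    proof -
      have "\<bar>(\<alpha>*\<alpha>) * R $$ (i,j)\<bar> \<le> \<alpha> * (\<alpha> * h0)"
        using aR \<alpha>(1) by (simp add: abs_mult mult.assoc mult_left_mono)
      then show ?thesis by linarith
    qed
    moreover have "C $$ (i,j) \<ge> 0" using Cnn C ij unfolding nonneg_mat_def by auto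
    ultimately consider "C $$ (i,j) = 0" | "C $$ (i,j) > 0" by linarith
    then show ?thesis
    proof cases
      case 1
      have G: "?G \<ge> \<delta>" using FC ij 1 by auto
      have "\<alpha> * h0 \<le> \<delta>" by (rule small_mult[OF h0(1) _ \<alpha>(1) \<alpha>(4) \<delta>]) (use h0 in \<open>simp add: Kc_def\<close>)
      then have "\<alpha> * (\<alpha> * h0) \<le> \<alpha> * \<delta>" using \<alpha> by (intro mult_left_mono) auto
      moreover have "\<alpha> * ?G \<ge> \<alpha> * \<delta>" using G \<alpha> by (intro mult_left_mono) auto
      ultimately show ?thesis unfolding C'e[OF ij] using 1 \<open>(\<alpha>*\<alpha>) * R $$ (i,j) \<ge> - (\<alpha> * (\<alpha> * h0))\<close> by linarith
    next
      case 2
      have cm: "cmin \<le> C $$ (i,j)" using cmin 2 ij by auto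
      have "\<alpha> * (g0 + h0) \<le> cmin"
        by (rule small_mult[OF _ _ \<alpha>(1) \<alpha>(5) cmin(1)]) (use h0 in \<open>simp_all add: Kc_def\<close>)
      moreover have "\<alpha> * \<bar>?G\<bar> \<le> \<alpha> * g0" using bG[OF ij] \<alpha> by (intro mult_left_mono) auto
      moreover have "\<alpha> * (\<alpha> * h0) \<le> \<alpha> * h0" using mult_right_mono[of \<alpha> 1 "\<alpha> * h0"] \<alpha> h0 by simp
      moreover have "\<alpha> * ?G \<ge> - (\<alpha> * \<bar>?G\<bar>)" using \<alpha> by (simp add: abs_mult[symmetric]) (metis abs_ge_minus_self abs_mult abs_of_pos minus_le_iff)
      ultimately show ?thesis unfolding C'e[OF ij] using cm \<open>(\<alpha>*\<alpha>) * R $$ (i,j) \<ge> - (\<alpha> * (\<alpha> * h0))\<close>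
        by (simp add: algebra_simps)
    qed
  qed
  have MPD: "M * (1\<^sub>m r + \<alpha> \<cdot>\<^sub>m D) = M + \<alpha> \<cdot>\<^sub>m (M * D)"
  proof -
    have "M * (1\<^sub>m r + \<alpha> \<cdot>\<^sub>m D) = M * 1\<^sub>m r + M * (\<alpha> \<cdot>\<^sub>m D)"
      by (rule mult_add_distrib_mat) (use M(1) D in auto)
    moreover have "M * 1\<^sub>m r = M" by (rule right_mult_one_mat[OF M(1)])
    moreover have "M * (\<alpha> \<cdot>\<^sub>m D) = \<alpha> \<cdot>\<^sub>m (M * D)" by (rule mult_smult_distrib[OF M(1) D])
    ultimately show ?thesis by (simp only:)
  qed
  have Mid1: "M = 1\<^sub>m r + (-\<alpha>) \<cdot>\<^sub>m (M * D)"
  proof (rule eq_matI)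
    fix i j assume ij: "i < dim_row (1\<^sub>m r + (-\<alpha>) \<cdot>\<^sub>m (M * D))" "j < dim_col (1\<^sub>m r + (-\<alpha>) \<cdot>\<^sub>m (M * D))"
    then have ij': "i < r" "j < r" using M(1) D by auto
    have "(M + \<alpha> \<cdot>\<^sub>m (M * D)) $$ (i,j) = (1\<^sub>m r :: real mat) $$ (i,j)" using M(2) MPD by simp
    then have "M $$ (i,j) + \<alpha> * (M * D) $$ (i,j) = (1\<^sub>m r :: real mat) $$ (i,j)" using ij' M(1) D by simp
    then show "M $$ (i,j) = (1\<^sub>m r + (-\<alpha>) \<cdot>\<^sub>m (M * D)) $$ (i,j)" using ij' M(1) D by simp
  qed (use M(1) D in auto)
  have "M * D = (1\<^sub>m r + (-\<alpha>) \<cdot>\<^sub>m (M * D)) * D"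
    using arg_cong[OF Mid1, of "\<lambda>Z. Z * D"] by (simp only:)
  also have "\<dots> = 1\<^sub>m r * D + ((-\<alpha>) \<cdot>\<^sub>m (M * D)) * D"
    by (rule add_mult_distrib_mat) (use M(1) D in auto)
  also have "\<dots> = D + (-\<alpha>) \<cdot>\<^sub>m (M * D * D)"
  proof -
    have "1\<^sub>m r * D = D" by (rule left_mult_one_mat[OF D])
    moreover have "((-\<alpha>) \<cdot>\<^sub>m (M * D)) * D = (-\<alpha>) \<cdot>\<^sub>m (M * D * D)"
      by (rule mult_smult_assoc_mat) (use M(1) D in auto)
    ultimately show ?thesis by (simp only:)
  qed
  finally have Mid2: "M * D = D + (-\<alpha>) \<cdot>\<^sub>m (M * D * D)" .
  have BM: "B * M = B + (-\<alpha>) \<cdot>\<^sub>m (B * D + (-\<alpha>) \<cdot>\<^sub>m (B * (M * D * D)))"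
  proof -
    have "B * M = B * (1\<^sub>m r + (-\<alpha>) \<cdot>\<^sub>m (M * D))"
      using arg_cong[OF Mid1, of "\<lambda>Z. B * Z"] by (simp only:)
    also have "\<dots> = B * 1\<^sub>m r + B * ((-\<alpha>) \<cdot>\<^sub>m (M * D))"
      by (rule mult_add_distrib_mat) (use M(1) D B in auto)
    also have "\<dots> = B + (-\<alpha>) \<cdot>\<^sub>m (B * (M * D))"
    proof -
      have "B * 1\<^sub>m r = B" by (rule right_mult_one_mat[OF B])
      moreover have "B * ((-\<alpha>) \<cdot>\<^sub>m (M * D)) = (-\<alpha>) \<cdot>\<^sub>m (B * (M * D))"
        by (rule mult_smult_distrib[OF B]) (use M(1) D in auto)
      ultimately show ?thesis by (simp only:)
    qed
    also have "B * (M * D) = B * D + (-\<alpha>) \<cdot>\<^sub>m (B * (M * D * D))"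
    proof -
      have "B * (M * D) = B * (D + (-\<alpha>) \<cdot>\<^sub>m (M * D * D))"
        using arg_cong[OF Mid2, of "\<lambda>Z. B * Z"] by (simp only:)
      also have "\<dots> = B * D + B * ((-\<alpha>) \<cdot>\<^sub>m (M * D * D))"
        by (rule mult_add_distrib_mat) (use M(1) D B in auto)
      finally have "B * (M * D) = B * D + B * ((-\<alpha>) \<cdot>\<^sub>m (M * D * D))" .
      moreover have "B * ((-\<alpha>) \<cdot>\<^sub>m (M * D * D)) = (-\<alpha>) \<cdot>\<^sub>m (B * (M * D * D))"
        by (rule mult_smult_distrib[OF B]) (use M(1) D in auto)
      ultimately show ?thesis by (simp only:)
    qed
    finally show ?thesis .
  qed
  have B'e: "B' $$ (i,j) = B $$ (i,j) + \<alpha> * (- (B * D) $$ (i,j)) + (\<alpha>*\<alpha>) * (B * (M * D * D)) $$ (i,j)"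
    if ij: "i < n" "j < r" for i j
    unfolding B'_def BM using ij B D M(1) by (simp add: algebra_simps)
  have bE1: "bnd (B * D) e1" unfolding e1_def by (rule bnd_mult[OF B D bb(2) d(2)])
  have bE2: "bnd (B * (M * D * D)) e2" unfolding e2_def
    by (rule bnd_mult[OF B _ bb(2) bnd_mult[OF _ D bnd_mult[OF M(1) D M(4) d(2)] d(2)]]) (use M(1) D in auto)
  have B'nn: "B' $$ (i,j) \<ge> 0" if ij: "i < n" "j < r" for i j
  proof -
    have e2b: "(\<alpha>*\<alpha>) * (B * (M * D * D)) $$ (i,j) \<ge> - (\<alpha> * (\<alpha> * e2))"
    proof -
      have "\<bar>(B * (M * D * D)) $$ (i,j)\<bar> \<le> e2" by (rule bndD[OF bE2]) (use ij B M(1) D in auto)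
      then have "\<alpha> * \<bar>(B * (M * D * D)) $$ (i,j)\<bar> \<le> \<alpha> * e2" using \<alpha> by (intro mult_left_mono) auto
      then have "\<bar>(\<alpha>*\<alpha>) * (B * (M * D * D)) $$ (i,j)\<bar> \<le> \<alpha> * (\<alpha> * e2)"
        using \<alpha>(1) by (simp add: abs_mult mult.assoc mult_left_mono)
      then show ?thesis by linarith
    qed
    have Bij: "B $$ (i,j) \<ge> 0" using Bnn B ij unfolding nonneg_mat_def by auto
    consider "\<forall>k<r. B $$ (i,k) = 0" | "B $$ (i,j) = 0" "\<exists>k<r. B $$ (i,k) \<noteq> 0" | "B $$ (i,j) > 0"
      using Bij by force
    then show ?thesis
    proof cases
      case 1
      have "B' $$ (i,j) = (\<Sum>k<r. B $$ (i,k) * M $$ (k,j))"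
        unfolding B'_def by (rule mult_entry[OF B M(1) ij])
      also have "\<dots> = 0" using 1 by simp
      finally show ?thesis by simp
    next
      case 2
      have G: "\<delta> \<le> - (B * D) $$ (i,j)" using FB ij 2 by auto
      have "\<alpha> * e2 \<le> \<delta>" by (rule small_mult[OF h0(3) _ \<alpha>(1) \<alpha>(4) \<delta>]) (use h0 in \<open>simp add: Kc_def\<close>)
      then have "\<alpha> * (\<alpha> * e2) \<le> \<alpha> * \<delta>" using \<alpha> by (intro mult_left_mono) auto
      moreover have "\<alpha> * (- (B * D) $$ (i,j)) \<ge> \<alpha> * \<delta>" using G \<alpha> by (intro mult_left_mono) auto
      ultimately show ?thesis unfolding B'e[OF ij] using 2 e2b by linarith
    next
      case 3
      have bm: "bmin \<le> B $$ (i,j)" using bmin 3 ij by auto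
      have "\<alpha> * (e1 + e2) \<le> bmin"
        by (rule small_mult[OF _ _ \<alpha>(1) \<alpha>(6) bmin(1)]) (use h0 in \<open>simp_all add: Kc_def\<close>)
      moreover have "\<alpha> * \<bar>(B * D) $$ (i,j)\<bar> \<le> \<alpha> * e1"
        using bndD[OF bE1] ij B D \<alpha> by (intro mult_left_mono) auto
      moreover have "\<alpha> * (\<alpha> * e2) \<le> \<alpha> * e2" using mult_right_mono[of \<alpha> 1 "\<alpha> * e2"] \<alpha> h0 by simp
      moreover have "\<alpha> * (- (B * D) $$ (i,j)) \<ge> - (\<alpha> * \<bar>(B * D) $$ (i,j)\<bar>)"
        using \<alpha> by (simp add: abs_mult[symmetric])
      ultimately show ?thesis unfolding B'e[OF ij] using bm e2b by (simp add: algebra_simps)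
    qed
  qed
  have Xsym: "transpose_mat X = X"
  proof -
    have Cs: "C $$ (i,j) = C $$ (j,i)" if "i < r" "j < r" for i j
      using Csym that C by (metis index_transpose_mat(1) carrier_matD)
    show ?thesis by (rule eq_matI) (use X C V Cs Ve in \<open>auto simp: X_def mult.commute\<close>)
  qed
  have C'sym: "transpose_mat C' = C'"
  proof -
    have "transpose_mat (P * X * transpose_mat P) = transpose_mat (transpose_mat P) * transpose_mat (P * X)"
      by (rule transpose_mult) (use P X in auto)
    also have "transpose_mat (P * X) = transpose_mat X * transpose_mat P"
      by (rule transpose_mult) (use P X in auto)
    finally show ?thesis unfolding C'_def Xsym using P X by simp
  qed
  have C'in: "C' \<in> symnn r"
    unfolding symnn_def nonneg_mat_def using C' C'sym C'nn by auto
  have MP: "M * P = 1\<^sub>m r" using M(2) by (simp add: P_def)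
  have PtMt: "transpose_mat P * transpose_mat M = 1\<^sub>m r"
    using MP M(1) P by (metis transpose_mult transpose_one)
  have r1: "M * (P * Z) = Z" if "Z \<in> carrier_mat r q" for Z q
    using that M(1) P MP by (simp add: assoc_mult_mat[symmetric, of M r r P r Z q])
  have r2: "transpose_mat P * (transpose_mat M * Z) = Z" if "Z \<in> carrier_mat r q" for Z q
    using that M(1) P PtMt by (simp add: assoc_mult_mat[symmetric, of "transpose_mat P" r r "transpose_mat M" r Z q])
  have prod: "B' * C' * transpose_mat B' = B * X * transpose_mat B"
  proof -
    have tBM: "transpose_mat (B * M) = transpose_mat M * transpose_mat B"
      by (rule transpose_mult[OF B M(1)])
    have XP: "X * transpose_mat P \<in> carrier_mat r r" using X P by simp
    have MB: "transpose_mat M * transpose_mat B \<in> carrier_mat r n" using M(1) B by simp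
    have "B * M * (P * X * transpose_mat P) = B * (M * (P * (X * transpose_mat P)))"
      using B M(1) P X by (simp add: assoc_mult_mat[of B n r M r _ r] assoc_mult_mat[of P r r X r _ r])
    also have "M * (P * (X * transpose_mat P)) = X * transpose_mat P" by (rule r1[OF XP])
    finally have 1: "B * M * (P * X * transpose_mat P) = B * (X * transpose_mat P)" .
    have "B * (X * transpose_mat P) * (transpose_mat M * transpose_mat B)
        = B * (X * (transpose_mat P * (transpose_mat M * transpose_mat B)))"
      using B P X MB by (simp add: assoc_mult_mat[of B n r _ r _ n] assoc_mult_mat[of X r r _ r _ n])
    also have "transpose_mat P * (transpose_mat M * transpose_mat B) = transpose_mat B"
      by (rule r2) (use B in simp)
    finally have 2: "B * (X * transpose_mat P) * (transpose_mat M * transpose_mat B) = B * (X * transpose_mat B)" .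
    show ?thesis unfolding B'_def C'_def tBM 1 2 using B X by (simp add: assoc_mult_mat[of B n r X r _ n])
  qed
  show ?thesis
    by (intro exI[of _ \<alpha>] exI[of _ B'] exI[of _ C'])
      (use \<alpha> B' B'nn C'in prod in \<open>auto simp: nonneg_mat_def X_def V_def\<close>)
qed



lemma outer_mult:
  assumes B: "B \<in> carrier_mat n r" and v: "v \<in> carrier_vec r"
  shows "B * outer v * transpose_mat B = outer (B *\<^sub>v v)"
proof (rule eq_matI)
  fix i j assume ij: "i < dim_row (outer (B *\<^sub>v v))" "j < dim_col (outer (B *\<^sub>v v))"
  then have ij': "i < n" "j < n" using B by (auto simp: outer_def)
  have V: "outer v \<in> carrier_mat r r" using v by (rule outer_carrier)
  have Bv: "(B *\<^sub>v v) $ i = (\<Sum>l<r. B $$ (i,l) * v $ l)" if "i < n" for i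
    using that B v by (auto simp: scalar_prod_def atLeast0LessThan mult.commute intro!: sum.cong)
  have BV: "(B * outer v) $$ (i,k) = (B *\<^sub>v v) $ i * v $ k" if "k < r" for k
  proof -
    have "(B * outer v) $$ (i,k) = (\<Sum>l<r. B $$ (i,l) * (v $ l * v $ k))"
      unfolding mult_entry[OF B V ij'(1) that] using v that by (intro sum.cong refl) (auto simp: outer_index)
    also have "\<dots> = (\<Sum>l<r. B $$ (i,l) * v $ l) * v $ k" by (simp add: sum_distrib_right mult.assoc)
    finally show ?thesis using Bv[OF ij'(1)] by simp
  qed
  have "(B * outer v * transpose_mat B) $$ (i,j) = (\<Sum>k<r. (B * outer v) $$ (i,k) * transpose_mat B $$ (k,j))"
    by (rule mult_entry[of _ n r _ n]) (use B V ij' in auto)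
  also have "\<dots> = (\<Sum>k<r. (B *\<^sub>v v) $ i * v $ k * B $$ (j,k))"
    using BV B ij' by (intro sum.cong) auto
  also have "\<dots> = (B *\<^sub>v v) $ i * (B *\<^sub>v v) $ j"
    using Bv[OF ij'(2)] by (simp add: sum_distrib_left mult.assoc mult.commute mult.left_commute)
  finally show "(B * outer v * transpose_mat B) $$ (i,j) = outer (B *\<^sub>v v) $$ (i,j)"
    using ij' B by (simp add: outer_def)
qed (use B in \<open>auto simp: outer_def\<close>)

theorem mainTheorem13:
  fixes A B C :: "real mat" and n r :: nat
  assumes "A \<in> E_set n"
    and "mrank A = r"
    and "A \<noteq> 0\<^sub>m n n"
    and "B \<in> carrier_mat n r" and "nonneg_mat B"
    and "C \<in> carrier_mat r r" and "nonneg_mat C" and "transpose_mat C = C"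
    and "A = B * C * transpose_mat B"
    and "\<forall>X W. X \<in> carrier_mat n r \<and> nonneg_mat X \<and> W \<in> carrier_mat r r \<and> nonneg_mat W \<and>
            transpose_mat W = W \<and> hadamard X B = 0\<^sub>m n r \<and> hadamard W C = 0\<^sub>m r r \<and>
            W * C = transpose_mat B * X \<longrightarrow> X = 0\<^sub>m n r \<and> W = 0\<^sub>m r r"
  shows "A \<notin> bd_E n"
proof
  note AE = assms(1) and rk = assms(2) and A0 = assms(3) and B = assms(4) and Bnn = assms(5)
    and C = assms(6) and Cnn = assms(7) and Csym = assms(8) and ABC = assms(9) and hyp = assms(10)
  assume "A \<in> bd_E n"
  then obtain u where pu: "perron_vec A u" and nall: "\<forall>\<alpha>::real. \<alpha> > 0 \<longrightarrow> A - \<alpha> \<cdot>\<^sub>m outer u \<notin> E_set n"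
    unfolding bd_E_def by blast
  have A: "A \<in> carrier_mat n n" and Asym: "transpose_mat A = A" and Ann: "nonneg_mat A"
    using AE unfolding E_set_def symnn_def by auto
  define \<rho> where "\<rho> = spectral_radius (map_mat complex_of_real A)"
  have \<rho>: "\<rho> > 0" unfolding \<rho>_def by (rule sr_pos[OF A Asym A0])
  have u: "u \<in> carrier_vec n" "u \<bullet> u = 1" "A *\<^sub>v u = \<rho> \<cdot>\<^sub>v u"
    using pu A unfolding perron_vec_def \<rho>_def by auto
  define v where "v = (1/\<rho>) \<cdot>\<^sub>v (C *\<^sub>v (transpose_mat B *\<^sub>v u))"
  have v: "v \<in> carrier_vec r" using C B u by (simp add: v_def)
  have Bv: "B *\<^sub>v v = u"
  proof -
    have w: "C *\<^sub>v (transpose_mat B *\<^sub>v u) \<in> carrier_vec r" using C B u by simp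
    have "A *\<^sub>v u = (B * C) *\<^sub>v (transpose_mat B *\<^sub>v u)"
      unfolding ABC by (rule assoc_mult_mat_vec) (use B C u in auto)
    also have "\<dots> = B *\<^sub>v (C *\<^sub>v (transpose_mat B *\<^sub>v u))"
      by (rule assoc_mult_mat_vec) (use B C u in auto)
    finally have "B *\<^sub>v (C *\<^sub>v (transpose_mat B *\<^sub>v u)) = A *\<^sub>v u" by simp
    then have "B *\<^sub>v v = (1/\<rho>) \<cdot>\<^sub>v (\<rho> \<cdot>\<^sub>v u)"
      unfolding v_def using mult_mat_vec[OF B w] u(3) by simp
    also have "\<dots> = u" using \<rho> by (simp add: smult_smult_assoc)
    finally show ?thesis .
  qed
  from farkas_app[OF B C Csym hyp, of v] obtain D \<delta> where D: "D \<in> carrier_mat r r" "\<delta> > 0"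
    "\<forall>i<n. \<forall>j<r. B $$ (i,j) = 0 \<and> (\<exists>k<r. B $$ (i,k) \<noteq> 0) \<longrightarrow> \<delta> \<le> - (B * D) $$ (i,j)"
    "\<forall>i<r. \<forall>j<r. C $$ (i,j) = 0 \<longrightarrow> \<delta> \<le> (D * C + C * transpose_mat D) $$ (i,j) - v $ i * v $ j"
    by blast
  from perturb[OF B Bnn C Cnn Csym D(1) v D(2) D(3) D(4), of "\<rho>/2"] \<rho>
  obtain \<alpha> B' C' where pt: "0 < \<alpha>" "\<alpha> \<le> \<rho>/2" "B' \<in> carrier_mat n r" "nonneg_mat B'" "C' \<in> symnn r"
    "B' * C' * transpose_mat B' = B * (C + (-\<alpha>) \<cdot>\<^sub>m outer v) * transpose_mat B"
    by auto
  have C': "C' \<in> carrier_mat r r" "nonneg_mat C'" using pt(5) unfolding symnn_def by auto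
  define A' where "A' = A - \<alpha> \<cdot>\<^sub>m outer u"
  have OU: "outer u \<in> carrier_mat n n" using u(1) by (rule outer_carrier)
  have OV: "outer v \<in> carrier_mat r r" using v by (rule outer_carrier)
  have A': "A' \<in> carrier_mat n n" unfolding A'_def using OU by (simp add: minus_carrier_mat)
  have prodA': "B' * C' * transpose_mat B' = A'"
  proof -
    have "B * (C + (-\<alpha>) \<cdot>\<^sub>m outer v) = B * C + (-\<alpha>) \<cdot>\<^sub>m (B * outer v)"
      using B C OV by (simp add: mult_add_distrib_mat[of B n r] mult_smult_distrib[of B n r])
    then have "B * (C + (-\<alpha>) \<cdot>\<^sub>m outer v) * transpose_mat B =
        B * C * transpose_mat B + (-\<alpha>) \<cdot>\<^sub>m (B * outer v * transpose_mat B)"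
      using B C OV by (simp add: add_mult_distrib_mat[of _ n r] mult_smult_assoc_mat[of _ n r])
    also have "B * outer v * transpose_mat B = outer u" using outer_mult[OF B v] Bv by simp
    also have "B * C * transpose_mat B + (-\<alpha>) \<cdot>\<^sub>m outer u = A'"
      unfolding A'_def ABC[symmetric] by (rule eq_matI) (use A OU in auto)
    finally show ?thesis using pt(6) by simp
  qed
  have A'nn: "nonneg_mat A'"
  proof -
    have 1: "nonneg_mat (B' * C')" by (rule nonneg_mult[OF pt(3) C'(1) pt(4) C'(2)])
    have 2: "nonneg_mat (transpose_mat B')" using pt(4) unfolding nonneg_mat_def by auto
    have "nonneg_mat (B' * C' * transpose_mat B')"
      by (rule nonneg_mult[OF _ _ 1 2]) (use pt(3) C'(1) in auto)
    then show ?thesis unfolding prodA' .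
  qed
  have A'sym: "transpose_mat A' = A'"
  proof (rule eq_matI)
    fix i j assume "i < dim_row A'" "j < dim_col A'"
    then have ij: "i < n" "j < n" using A' by auto
    have "A $$ (j,i) = A $$ (i,j)" using Asym ij A by (metis index_transpose_mat(1) carrier_matD)
    then show "transpose_mat A' $$ (i,j) = A' $$ (i,j)" using ij A OU u(1)
      by (simp add: A'_def outer_index mult.commute)
  qed (use A' in auto)
  have A'symnn: "A' \<in> symnn n" unfolding symnn_def using A' A'sym A'nn by auto
  define P where "P = (\<lambda>k. \<exists>B C. B \<in> carrier_mat (dim_row A') k \<and> nonneg_mat B \<and>
        C \<in> symnn k \<and> A' = B * C * transpose_mat B)"
  have dA': "dim_row A' = n" using A' by simp
  have Pr: "P r" unfolding P_def dA'
    by (intro exI[of _ B'] exI[of _ C'] conjI pt(3) pt(4) pt(5) prodA'[symmetric])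
  have st_le: "snt_rank A' \<le> r" unfolding snt_rank_def P_def[symmetric] by (rule Least_le[of P r, OF Pr])
  have "P (snt_rank A')" unfolding snt_rank_def P_def[symmetric] by (rule LeastI[of P r, OF Pr])
  then obtain B'' C'' where B'': "B'' \<in> carrier_mat n (snt_rank A')" and C'': "C'' \<in> symnn (snt_rank A')"
    and A'BC: "A' = B'' * C'' * transpose_mat B''"
    unfolding P_def dA' by blast
  have C''c: "C'' \<in> carrier_mat (snt_rank A') (snt_rank A')" using C'' unfolding symnn_def by auto
  have rk_le_st: "mrank A' \<le> snt_rank A'"
  proof -
    have "A' = B'' * (C'' * transpose_mat B'')" using A'BC B'' C''c by simp
    then have "mrank A' = vec_space.rank n (B'' * (C'' * transpose_mat B''))"
      unfolding mrank_def using A' B'' by simp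
    also have "\<dots> \<le> vec_space.rank n B''"
      by (rule vec_space.rank_mult_le[OF B'', of _ n]) (use B'' C''c in simp)
    also have "\<dots> \<le> snt_rank A'" by (rule vec_space.rank_le_nc[OF B''])
    finally show ?thesis .
  qed
  have r_le_rk: "r \<le> mrank A'"
  proof -
    define c where "c = \<alpha> / (\<rho> - \<alpha>)"
    define Y where "Y = 1\<^sub>m n + c \<cdot>\<^sub>m outer u"
    have Y: "Y \<in> carrier_mat n n" using OU by (simp add: Y_def)
    have Au: "(\<Sum>k<n. A $$ (i,k) * u $ k) = \<rho> * u $ i" if "i < n" for i
    proof -
      have "(A *\<^sub>v u) $ i = (\<Sum>k<n. A $$ (i,k) * u $ k)"
        using that A u(1) by (auto simp: scalar_prod_def atLeast0LessThan intro!: sum.cong)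
      then show ?thesis using u(3) that u(1) by simp
    qed
    have uu: "(\<Sum>k<n. u $ k * u $ k) = 1" using u(1,2) by (auto simp: scalar_prod_def atLeast0LessThan)
    have A'u: "(\<Sum>k<n. A' $$ (i,k) * u $ k) = (\<rho> - \<alpha>) * u $ i" if i: "i < n" for i
    proof -
      have "(\<Sum>k<n. A' $$ (i,k) * u $ k) = (\<Sum>k<n. A $$ (i,k) * u $ k - \<alpha> * u $ i * (u $ k * u $ k))"
        using i A OU u(1) by (intro sum.cong refl) (auto simp: A'_def outer_index algebra_simps)
      also have "\<dots> = \<rho> * u $ i - \<alpha> * u $ i * 1"
        using Au[OF i] uu by (simp add: sum_subtractf sum_distrib_left[symmetric])
      finally show ?thesis by (simp add: algebra_simps)
    qed
    have AY: "A' * Y = A"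
    proof (rule eq_matI)
      fix i j assume "i < dim_row A" "j < dim_col A"
      then have ij: "i < n" "j < n" using A by auto
      have "(A' * Y) $$ (i,j) = (\<Sum>k<n. A' $$ (i,k) * Y $$ (k,j))" by (rule mult_entry[OF A' Y ij])
      also have "\<dots> = (\<Sum>k<n. (if k = j then A' $$ (i,k) else 0) + c * u $ j * (A' $$ (i,k) * u $ k))"
        using ij OU u(1) by (intro sum.cong refl) (auto simp: Y_def outer_index algebra_simps)
      also have "\<dots> = A' $$ (i,j) + c * u $ j * ((\<rho> - \<alpha>) * u $ i)"
        using ij A'u[OF ij(1)] by (simp add: sum.distrib sum_distrib_left[symmetric] sum.delta)
      also have "c * (\<rho> - \<alpha>) = \<alpha>" using pt(1,2) \<rho> by (simp add: c_def)
      then have "A' $$ (i,j) + c * u $ j * ((\<rho> - \<alpha>) * u $ i) = A' $$ (i,j) + \<alpha> * u $ i * u $ j"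
        by (metis mult.assoc mult.commute)
      also have "\<dots> = A $$ (i,j)" using ij A OU u(1) by (simp add: A'_def outer_index)
      finally show "(A' * Y) $$ (i,j) = A $$ (i,j)" .
    qed (use A A' Y in auto)
    have "r = vec_space.rank n (A' * Y)" using rk AY A unfolding mrank_def by simp
    also have "\<dots> \<le> vec_space.rank n A'" by (rule vec_space.rank_mult_le[OF A' Y])
    also have "\<dots> = mrank A'" unfolding mrank_def using A' by simp
    finally show ?thesis .
  qed
  have "A' \<in> E_set n" unfolding E_set_def using A'symnn rk_le_st r_le_rk st_le by auto
  then show False using nall pt(1) by (simp add: A'_def)
qed


end
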